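(* Assume the root system is indecomposable. A Coxeter element $c \in W$ (a product of all simple reflections, each appearing exactly once, in some order) is rational if and only if the type of $W$ is $A_r$ ($r\ge1$) and $c \in \{C, C^{-1}\}$, where $C = s_1 s_2 \cdots s_r$ (simple roots of $A_r$ numbered along the Dynkin diagram). Moreover, for $r \geq 2$, $C$ and $C^{-1}$ have valency $1$ in $\Gamma(A_r)$: the only neighbor of $C$ is $s_r C$ and the only neighbor of $C^{-1}$ is $s_1 C^{-1}$.
   Context: $W$ is the Weyl group of a (reduced, crystallographic) root system $\Pi$ with simple roots $\Delta = \{\alpha_1,\dots,\alpha_r\}$, positive roots $\Pi_+$, simple reflections $s_i$. $\alpha \le \beta$ iff $\beta-\alpha$ is a nonnegative integer combination of simple roots. For $A\subseteq\Pi_+$, $\mathrm{Adj}(A) = \{\alpha\in\Pi_+ : \exists\beta\in A,\ \alpha\le\beta\}$. For $u\in W$: $\nu^0(u) = u(\Pi_+)\cap\Pi_+$, $\nu^k(u) = u(\mathrm{Adj}\,\nu^{k-1}(u))\cap\Pi_+$; the sequence is descending and eventually constant with value $\nu(u)$; $u$ is rational iff $\nu(u)=\emptyset$. The rationality graph $\Gamma(W)$ has the rational elements as vertices, $u,v$ adjacent iff $u = s_\alpha v$ for some simple $\alpha$. *)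

theory Defs
  imports "HOL-Analysis.Analysis"
begin

definition refl_vec :: "'a::euclidean_space \<Rightarrow> 'a \<Rightarrow> 'a" where
  "refl_vec \<alpha> x = x - (2 * (x \<bullet> \<alpha>) / (\<alpha> \<bullet> \<alpha>)) *\<^sub>R \<alpha>"

definition root_system :: "'a::euclidean_space set \<Rightarrow> bool" where
  "root_system R \<longleftrightarrow> finite R \<and> 0 \<notin> R \<and> span R = UNIV
     \<and> (\<forall>\<alpha>\<in>R. refl_vec \<alpha> ` R = R)
     \<and> (\<forall>\<alpha>\<in>R. \<forall>\<beta>\<in>R. 2 * (\<beta> \<bullet> \<alpha>) / (\<alpha> \<bullet> \<alpha>) \<in> \<int>)
     \<and> (\<forall>\<alpha>\<in>R. \<forall>t::real. t *\<^sub>R \<alpha> \<in> R \<longrightarrow> t = 1 \<or> t = -1)"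

definition indecomposable :: "'a::euclidean_space set \<Rightarrow> bool" where
  "indecomposable R \<longleftrightarrow> \<not> (\<exists>A B. A \<noteq> {} \<and> B \<noteq> {} \<and> A \<union> B = R
       \<and> (\<forall>a\<in>A. \<forall>b\<in>B. a \<bullet> b = 0))"

definition base :: "'a::euclidean_space set \<Rightarrow> 'a set \<Rightarrow> bool" where
  "base R \<Delta> \<longleftrightarrow> \<Delta> \<subseteq> R \<and> independent \<Delta> \<and>
     (\<forall>\<beta>\<in>R. \<exists>c::'a \<Rightarrow> int. \<beta> = (\<Sum>\<alpha>\<in>\<Delta>. of_int (c \<alpha>) *\<^sub>R \<alpha>)
        \<and> ((\<forall>\<alpha>\<in>\<Delta>. c \<alpha> \<ge> 0) \<or> (\<forall>\<alpha>\<in>\<Delta>. c \<alpha> \<le> 0)))"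

definition pos_roots :: "'a::euclidean_space set \<Rightarrow> 'a set \<Rightarrow> 'a set" where
  "pos_roots R \<Delta> = {\<beta>\<in>R. \<exists>c::'a \<Rightarrow> int. (\<forall>\<alpha>\<in>\<Delta>. c \<alpha> \<ge> 0)
        \<and> \<beta> = (\<Sum>\<alpha>\<in>\<Delta>. of_int (c \<alpha>) *\<^sub>R \<alpha>)}"

definition root_le :: "'a::euclidean_space set \<Rightarrow> 'a \<Rightarrow> 'a \<Rightarrow> bool" where
  "root_le \<Delta> \<alpha> \<beta> \<longleftrightarrow> (\<exists>c::'a \<Rightarrow> nat. \<beta> - \<alpha> = (\<Sum>\<gamma>\<in>\<Delta>. real (c \<gamma>) *\<^sub>R \<gamma>))"

inductive_set weyl :: "'a::euclidean_space set \<Rightarrow> ('a \<Rightarrow> 'a) set" for R where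
  weyl_id: "id \<in> weyl R"
| weyl_step: "u \<in> weyl R \<Longrightarrow> \<alpha> \<in> R \<Longrightarrow> refl_vec \<alpha> \<circ> u \<in> weyl R"

definition Adj :: "'a::euclidean_space set \<Rightarrow> 'a set \<Rightarrow> 'a set \<Rightarrow> 'a set" where
  "Adj R \<Delta> A = {\<alpha>\<in>pos_roots R \<Delta>. \<exists>\<beta>\<in>A. root_le \<Delta> \<alpha> \<beta>}"

fun nu_seq :: "'a::euclidean_space set \<Rightarrow> 'a set \<Rightarrow> ('a \<Rightarrow> 'a) \<Rightarrow> nat \<Rightarrow> 'a set" where
  "nu_seq R \<Delta> u 0 = u ` pos_roots R \<Delta> \<inter> pos_roots R \<Delta>"
| "nu_seq R \<Delta> u (Suc k) = u ` Adj R \<Delta> (nu_seq R \<Delta> u k) \<inter> pos_roots R \<Delta>"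

definition nu :: "'a::euclidean_space set \<Rightarrow> 'a set \<Rightarrow> ('a \<Rightarrow> 'a) \<Rightarrow> 'a set" where
  "nu R \<Delta> u = (THE S. \<exists>k0. \<forall>k\<ge>k0. nu_seq R \<Delta> u k = S)"

definition rational :: "'a::euclidean_space set \<Rightarrow> 'a set \<Rightarrow> ('a \<Rightarrow> 'a) \<Rightarrow> bool" where
  "rational R \<Delta> u \<longleftrightarrow> u \<in> weyl R \<and> nu R \<Delta> u = {}"

definition gamma_neighbors :: "'a::euclidean_space set \<Rightarrow> 'a set \<Rightarrow> ('a \<Rightarrow> 'a) \<Rightarrow> ('a \<Rightarrow> 'a) set" where
  "gamma_neighbors R \<Delta> v = {u. rational R \<Delta> u \<and> (\<exists>\<alpha>\<in>\<Delta>. u = refl_vec \<alpha> \<circ> v)}"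

definition refl_prod :: "'a::euclidean_space list \<Rightarrow> 'a \<Rightarrow> 'a" where
  "refl_prod xs = foldr (\<lambda>\<alpha> f. refl_vec \<alpha> \<circ> f) xs id"

definition coxeter_element :: "'a::euclidean_space set \<Rightarrow> ('a \<Rightarrow> 'a) \<Rightarrow> bool" where
  "coxeter_element \<Delta> c \<longleftrightarrow> (\<exists>xs. distinct xs \<and> set xs = \<Delta> \<and> c = refl_prod xs)"

definition cartan :: "'a::euclidean_space \<Rightarrow> 'a \<Rightarrow> real" where
  "cartan \<alpha> \<beta> = 2 * (\<alpha> \<bullet> \<beta>) / (\<beta> \<bullet> \<beta>)"

text \<open>A numbering \<alpha>_1,...,\<alpha>_r of the simple roots along a Dynkin diagram of type A_r:
  the number of bonds between nodes i and j (i \<noteq> j) is 1 if |i-j| = 1 and 0 otherwise.\<close>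
definition typeA_numbering :: "'a::euclidean_space set \<Rightarrow> (nat \<Rightarrow> 'a) \<Rightarrow> bool" where
  "typeA_numbering \<Delta> f \<longleftrightarrow> bij_betw f {1..card \<Delta>} \<Delta> \<and>
     (\<forall>i\<in>{1..card \<Delta>}. \<forall>j\<in>{1..card \<Delta>}. i \<noteq> j \<longrightarrow>
        cartan (f i) (f j) * cartan (f j) (f i) = (if i = j + 1 \<or> j = i + 1 then 1 else 0))"

definition coxC :: "'a::euclidean_space set \<Rightarrow> (nat \<Rightarrow> 'a) \<Rightarrow> 'a \<Rightarrow> 'a" where
  "coxC \<Delta> f = refl_prod (map f [1..<card \<Delta> + 1])"

end

theory Submission
  imports Defs
begin

lemma refl_vec_alt: "refl_vec a x = x - cartan x a *\<^sub>R a"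
  by (simp add: refl_vec_def cartan_def)

lemma cartan_self: "a \<noteq> 0 \<Longrightarrow> cartan a a = 2"
  by (simp add: cartan_def)

lemma refl_vec_invol: "a \<noteq> 0 \<Longrightarrow> refl_vec a (refl_vec a x) = x"
  unfolding refl_vec_def by (simp add: inner_diff_left algebra_simps)

lemma refl_vec_comp_invol: "a \<noteq> 0 \<Longrightarrow> refl_vec a \<circ> refl_vec a = id"
  by (auto simp: refl_vec_invol)

lemma refl_prod_Cons: "refl_prod (x # xs) = refl_vec x \<circ> refl_prod xs"
  by (simp add: refl_prod_def)

lemma refl_prod_Nil: "refl_prod [] = id"
  by (simp add: refl_prod_def)

lemma refl_prod_append: "refl_prod (xs @ ys) = refl_prod xs \<circ> refl_prod ys"
  by (induction xs) (auto simp: refl_prod_Cons refl_prod_Nil)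

lemma refl_prod_rev: "0 \<notin> set xs \<Longrightarrow> refl_prod xs \<circ> refl_prod (rev xs) = id"
proof (induction xs)
  case Nil then show ?case by (simp add: refl_prod_Nil)
next
  case (Cons x xs)
  have "refl_prod (x # xs) \<circ> refl_prod (rev (x # xs)) =
        refl_vec x \<circ> (refl_prod xs \<circ> refl_prod (rev xs)) \<circ> refl_vec x"
    by (simp add: refl_prod_append refl_prod_Cons refl_prod_Nil comp_assoc)
  also have "\<dots> = id" using Cons by (auto simp: refl_vec_invol fun_eq_iff)
  finally show ?case .
qed

lemma refl_prod_rev': "0 \<notin> set xs \<Longrightarrow> refl_prod (rev xs) \<circ> refl_prod xs = id"
  using refl_prod_rev[of "rev xs"] by simp

lemma inv_refl_prod: "0 \<notin> set xs \<Longrightarrow> inv (refl_prod xs) = refl_prod (rev xs)"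
  by (rule inv_unique_comp) (auto intro: refl_prod_rev refl_prod_rev')

lemma weyl_refl_prod: "set xs \<subseteq> R \<Longrightarrow> refl_prod xs \<in> weyl R"
  by (induction xs) (auto simp: refl_prod_Cons refl_prod_Nil intro: weyl.intros)

lemma weyl_maps_R:
  assumes "root_system R" "u \<in> weyl R" shows "u ` R \<subseteq> R"
  using assms(2)
proof induction
  case weyl_id then show ?case by simp
next
  case (weyl_step u \<alpha>)
  then show ?case using assms(1) unfolding root_system_def by fastforce
qed


locale rsys =
  fixes R \<Delta> :: "'a::euclidean_space set"
  assumes rs: "root_system R" and bs: "base R \<Delta>"
begin

lemma finR: "finite R" using rs by (simp add: root_system_def)
lemma zero_notin_R: "0 \<notin> R" using rs by (simp add: root_system_def)
lemma D_sub: "\<Delta> \<subseteq> R" using bs by (simp add: base_def)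
lemma finD: "finite \<Delta>" using D_sub finR finite_subset by blast
lemma indepD: "independent \<Delta>" using bs by (simp add: base_def)
lemma refl_in_R: "\<alpha> \<in> R \<Longrightarrow> \<beta> \<in> R \<Longrightarrow> refl_vec \<alpha> \<beta> \<in> R"
  using rs unfolding root_system_def by blast
lemma cartan_int: "\<alpha> \<in> R \<Longrightarrow> \<beta> \<in> R \<Longrightarrow> cartan \<beta> \<alpha> \<in> \<int>"
  using rs unfolding root_system_def cartan_def by blast
lemma reduced: "\<alpha> \<in> R \<Longrightarrow> t *\<^sub>R \<alpha> \<in> R \<Longrightarrow> t = 1 \<or> t = -1"
  using rs unfolding root_system_def by blast
lemma nz: "\<alpha> \<in> R \<Longrightarrow> \<alpha> \<noteq> 0" using zero_notin_R by auto
lemma nzD: "\<alpha> \<in> \<Delta> \<Longrightarrow> \<alpha> \<noteq> 0" using D_sub nz by auto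
lemma neg_root: "\<beta> \<in> R \<Longrightarrow> - \<beta> \<in> R"
proof -
  assume b: "\<beta> \<in> R"
  have "refl_vec \<beta> \<beta> = - \<beta>" using nz[OF b] by (simp add: refl_vec_alt cartan_self scaleR_2)
  then show ?thesis using refl_in_R[OF b b] by simp
qed

lemma base_repr: "\<beta> \<in> R \<Longrightarrow> \<exists>c::'a \<Rightarrow> int. \<beta> = (\<Sum>\<alpha>\<in>\<Delta>. of_int (c \<alpha>) *\<^sub>R \<alpha>)
        \<and> ((\<forall>\<alpha>\<in>\<Delta>. c \<alpha> \<ge> 0) \<or> (\<forall>\<alpha>\<in>\<Delta>. c \<alpha> \<le> 0))"
  using bs unfolding base_def by blast

lemma spanD: "span \<Delta> = UNIV"
proof -
  have "R \<subseteq> span \<Delta>"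
  proof
    fix \<beta> assume "\<beta> \<in> R"
    then obtain c :: "'a \<Rightarrow> int" where "\<beta> = (\<Sum>\<alpha>\<in>\<Delta>. of_int (c \<alpha>) *\<^sub>R \<alpha>)"
      using base_repr by blast
    then show "\<beta> \<in> span \<Delta>" by (simp add: span_sum span_scale span_base)
  qed
  then have "span R \<subseteq> span \<Delta>" by (simp add: span_minimal)
  then show ?thesis using rs unfolding root_system_def by auto
qed

definition coef :: "'a \<Rightarrow> 'a \<Rightarrow> real" where
  "coef v = (SOME c. v = (\<Sum>\<alpha>\<in>\<Delta>. c \<alpha> *\<^sub>R \<alpha>))"

lemma coef_repr: "v = (\<Sum>\<alpha>\<in>\<Delta>. coef v \<alpha> *\<^sub>R \<alpha>)"
proof -
  have "v \<in> span \<Delta>" using spanD by simp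
  then have "v \<in> range (\<lambda>u. \<Sum>\<alpha>\<in>\<Delta>. u \<alpha> *\<^sub>R \<alpha>)"
    by (simp only: real_vector.span_finite[OF finD])
  then have "\<exists>c. v = (\<Sum>\<alpha>\<in>\<Delta>. c \<alpha> *\<^sub>R \<alpha>)" by blast
  then show ?thesis unfolding coef_def by (rule someI_ex)
qed

lemma coef_unique:
  assumes "v = (\<Sum>\<alpha>\<in>\<Delta>. c \<alpha> *\<^sub>R \<alpha>)" "\<gamma> \<in> \<Delta>"
  shows "coef v \<gamma> = c \<gamma>"
proof -
  have "(\<Sum>\<alpha>\<in>\<Delta>. (coef v \<alpha> - c \<alpha>) *\<^sub>R \<alpha>) = (\<Sum>\<alpha>\<in>\<Delta>. coef v \<alpha> *\<^sub>R \<alpha>) - (\<Sum>\<alpha>\<in>\<Delta>. c \<alpha> *\<^sub>R \<alpha>)"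
    by (simp add: scaleR_diff_left sum_subtractf)
  also have "\<dots> = v - v" using coef_repr[of v, symmetric] assms(1) by (simp only:)
  also have "\<dots> = 0" by simp
  finally have "(\<Sum>\<alpha>\<in>\<Delta>. (coef v \<alpha> - c \<alpha>) *\<^sub>R \<alpha>) = 0" .
  then have "\<not> (\<exists>\<alpha>\<in>\<Delta>. coef v \<alpha> - c \<alpha> \<noteq> 0)"
    using indepD real_vector.dependent_finite[OF finD, of] by (auto simp only:)
  then have "\<forall>\<alpha>\<in>\<Delta>. coef v \<alpha> - c \<alpha> = 0" by blast
  then show ?thesis using assms(2) by simp
qed

lemma coef_add: "\<gamma> \<in> \<Delta> \<Longrightarrow> coef (v + w) \<gamma> = coef v \<gamma> + coef w \<gamma>"
proof (rule coef_unique)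
  have "(\<Sum>\<alpha>\<in>\<Delta>. (coef v \<alpha> + coef w \<alpha>) *\<^sub>R \<alpha>) = (\<Sum>\<alpha>\<in>\<Delta>. coef v \<alpha> *\<^sub>R \<alpha>) + (\<Sum>\<alpha>\<in>\<Delta>. coef w \<alpha> *\<^sub>R \<alpha>)"
    by (simp add: scaleR_add_left sum.distrib)
  then show "v + w = (\<Sum>\<alpha>\<in>\<Delta>. (coef v \<alpha> + coef w \<alpha>) *\<^sub>R \<alpha>)"
    using coef_repr[of v, symmetric] coef_repr[of w, symmetric] by (simp only:)
qed

lemma coef_scale: "\<gamma> \<in> \<Delta> \<Longrightarrow> coef (t *\<^sub>R v) \<gamma> = t * coef v \<gamma>"
proof (rule coef_unique)
  have "(\<Sum>\<alpha>\<in>\<Delta>. (t * coef v \<alpha>) *\<^sub>R \<alpha>) = t *\<^sub>R (\<Sum>\<alpha>\<in>\<Delta>. coef v \<alpha> *\<^sub>R \<alpha>)"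
    by (simp add: scaleR_sum_right)
  then show "t *\<^sub>R v = (\<Sum>\<alpha>\<in>\<Delta>. (t * coef v \<alpha>) *\<^sub>R \<alpha>)"
    using coef_repr[of v, symmetric] by (simp only:)
qed

lemma coef_diff: "\<gamma> \<in> \<Delta> \<Longrightarrow> coef (v - w) \<gamma> = coef v \<gamma> - coef w \<gamma>"
proof (rule coef_unique)
  have "(\<Sum>\<alpha>\<in>\<Delta>. (coef v \<alpha> - coef w \<alpha>) *\<^sub>R \<alpha>) = (\<Sum>\<alpha>\<in>\<Delta>. coef v \<alpha> *\<^sub>R \<alpha>) - (\<Sum>\<alpha>\<in>\<Delta>. coef w \<alpha> *\<^sub>R \<alpha>)"
    by (simp add: scaleR_diff_left sum_subtractf)
  then show "v - w = (\<Sum>\<alpha>\<in>\<Delta>. (coef v \<alpha> - coef w \<alpha>) *\<^sub>R \<alpha>)"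
    using coef_repr[of v, symmetric] coef_repr[of w, symmetric] by (simp only:)
qed

lemma coef_neg: "\<gamma> \<in> \<Delta> \<Longrightarrow> coef (- v) \<gamma> = - coef v \<gamma>"
  using coef_scale[of \<gamma> "-1" v] by simp

lemma coef_simple: "\<alpha> \<in> \<Delta> \<Longrightarrow> \<gamma> \<in> \<Delta> \<Longrightarrow> coef \<alpha> \<gamma> = (if \<gamma> = \<alpha> then 1 else 0)"
proof (rule coef_unique)
  assume "\<alpha> \<in> \<Delta>"
  then show "\<alpha> = (\<Sum>\<beta>\<in>\<Delta>. (if \<beta> = \<alpha> then 1 else 0) *\<^sub>R \<beta>)"
    using finD by (simp add: if_distrib[of "\<lambda>t. t *\<^sub>R _"] sum.delta' cong: if_cong)
qed

lemma coef_zero_all: "(\<forall>\<gamma>\<in>\<Delta>. coef v \<gamma> = 0) \<Longrightarrow> v = 0"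
proof -
  assume "\<forall>\<gamma>\<in>\<Delta>. coef v \<gamma> = 0"
  then have "(\<Sum>\<alpha>\<in>\<Delta>. coef v \<alpha> *\<^sub>R \<alpha>) = 0" by simp
  then show ?thesis by (simp only: coef_repr[symmetric])
qed

lemma coef_eq_vec: "(\<forall>\<gamma>\<in>\<Delta>. coef v \<gamma> = coef w \<gamma>) \<Longrightarrow> v = w"
proof -
  assume h: "\<forall>\<gamma>\<in>\<Delta>. coef v \<gamma> = coef w \<gamma>"
  have "(\<Sum>\<alpha>\<in>\<Delta>. coef v \<alpha> *\<^sub>R \<alpha>) = (\<Sum>\<alpha>\<in>\<Delta>. coef w \<alpha> *\<^sub>R \<alpha>)"
    using h by (intro sum.cong) auto
  then show "v = w" by (simp only: coef_repr[symmetric])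
qed

lemma root_coef: assumes "\<beta> \<in> R"
  shows "(\<forall>\<alpha>\<in>\<Delta>. coef \<beta> \<alpha> \<in> \<int>) \<and> ((\<forall>\<alpha>\<in>\<Delta>. coef \<beta> \<alpha> \<ge> 0) \<or> (\<forall>\<alpha>\<in>\<Delta>. coef \<beta> \<alpha> \<le> 0))"
proof -
  obtain c :: "'a \<Rightarrow> int" where c: "\<beta> = (\<Sum>\<alpha>\<in>\<Delta>. of_int (c \<alpha>) *\<^sub>R \<alpha>)"
      "(\<forall>\<alpha>\<in>\<Delta>. c \<alpha> \<ge> 0) \<or> (\<forall>\<alpha>\<in>\<Delta>. c \<alpha> \<le> 0)"
    using base_repr[OF assms] by blast
  have "\<forall>\<alpha>\<in>\<Delta>. coef \<beta> \<alpha> = of_int (c \<alpha>)" using coef_unique[OF c(1)] by blast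
  then show ?thesis using c(2) by auto
qed

lemma root_coef_int: "\<beta> \<in> R \<Longrightarrow> \<alpha> \<in> \<Delta> \<Longrightarrow> coef \<beta> \<alpha> \<in> \<int>"
  using root_coef by blast

abbreviation "PR \<equiv> pos_roots R \<Delta>"

lemma pos_roots_char: "PR = {\<beta>\<in>R. \<forall>\<alpha>\<in>\<Delta>. coef \<beta> \<alpha> \<ge> 0}"
proof (intro set_eqI iffI)
  fix \<beta> assume "\<beta> \<in> PR"
  then obtain c :: "'a \<Rightarrow> int" where "\<beta> \<in> R" "\<forall>\<alpha>\<in>\<Delta>. c \<alpha> \<ge> 0" "\<beta> = (\<Sum>\<alpha>\<in>\<Delta>. of_int (c \<alpha>) *\<^sub>R \<alpha>)"
    unfolding pos_roots_def by blast
  then show "\<beta> \<in> {\<beta>\<in>R. \<forall>\<alpha>\<in>\<Delta>. coef \<beta> \<alpha> \<ge> 0}" using coef_unique by auto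
next
  fix \<beta> assume b: "\<beta> \<in> {\<beta>\<in>R. \<forall>\<alpha>\<in>\<Delta>. coef \<beta> \<alpha> \<ge> 0}"
  then obtain c :: "'a \<Rightarrow> int" where c: "\<beta> = (\<Sum>\<alpha>\<in>\<Delta>. of_int (c \<alpha>) *\<^sub>R \<alpha>)"
    using base_repr by blast
  have "\<forall>\<alpha>\<in>\<Delta>. c \<alpha> \<ge> 0" using coef_unique[OF c] b by fastforce
  then show "\<beta> \<in> PR" using b c unfolding pos_roots_def by blast
qed

lemma PR_sub: "PR \<subseteq> R" by (auto simp: pos_roots_char)

lemma pos_root_if: "\<beta> \<in> R \<Longrightarrow> \<gamma> \<in> \<Delta> \<Longrightarrow> coef \<beta> \<gamma> > 0 \<Longrightarrow> \<beta> \<in> PR"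
  using root_coef[of \<beta>] by (force simp: pos_roots_char)

lemma not_pos_root_if: "\<gamma> \<in> \<Delta> \<Longrightarrow> coef \<beta> \<gamma> < 0 \<Longrightarrow> \<beta> \<notin> PR"
  by (force simp: pos_roots_char)

lemma PR_nonneg: "\<beta> \<in> PR \<Longrightarrow> \<gamma> \<in> \<Delta> \<Longrightarrow> coef \<beta> \<gamma> \<ge> 0"
  by (simp add: pos_roots_char)

lemma D_sub_PR: "\<Delta> \<subseteq> PR"
  using D_sub by (auto simp: pos_roots_char coef_simple)

lemma PR_nonzero: "\<beta> \<in> PR \<Longrightarrow> \<exists>\<gamma>\<in>\<Delta>. coef \<beta> \<gamma> \<noteq> 0"
  using coef_zero_all PR_sub nz by blast

lemma root_le_coef: "root_le \<Delta> a b \<Longrightarrow> \<gamma> \<in> \<Delta> \<Longrightarrow> coef a \<gamma> \<le> coef b \<gamma>"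
proof -
  assume "root_le \<Delta> a b" "\<gamma> \<in> \<Delta>"
  then obtain c :: "'a \<Rightarrow> nat" where c: "b - a = (\<Sum>\<gamma>\<in>\<Delta>. real (c \<gamma>) *\<^sub>R \<gamma>)"
    unfolding root_le_def by blast
  have "coef (b - a) \<gamma> = real (c \<gamma>)" by (rule coef_unique[OF c \<open>\<gamma> \<in> \<Delta>\<close>])
  then show ?thesis using coef_diff[OF \<open>\<gamma> \<in> \<Delta>\<close>, of b a] by simp
qed

lemma root_le_intro:
  assumes "a \<in> R" "b \<in> R" "\<forall>\<gamma>\<in>\<Delta>. coef a \<gamma> \<le> coef b \<gamma>"
  shows "root_le \<Delta> a b"
proof -
  define c where "c \<gamma> = nat \<lfloor>coef b \<gamma> - coef a \<gamma>\<rfloor>" for \<gamma>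
  have "\<forall>\<gamma>\<in>\<Delta>. real (c \<gamma>) = coef (b - a) \<gamma>"
  proof
    fix \<gamma> assume g: "\<gamma> \<in> \<Delta>"
    have "coef b \<gamma> - coef a \<gamma> \<in> \<int>" using root_coef_int assms g by auto
    then obtain k where k: "coef b \<gamma> - coef a \<gamma> = of_int k" by (auto elim: Ints_cases)
    have "k \<ge> 0" using k assms(3) g by fastforce
    then show "real (c \<gamma>) = coef (b - a) \<gamma>" using k coef_diff[OF g] by (simp add: c_def)
  qed
  then have "(\<Sum>\<gamma>\<in>\<Delta>. coef (b - a) \<gamma> *\<^sub>R \<gamma>) = (\<Sum>\<gamma>\<in>\<Delta>. real (c \<gamma>) *\<^sub>R \<gamma>)"
    by (intro sum.cong) auto
  then have "b - a = (\<Sum>\<gamma>\<in>\<Delta>. real (c \<gamma>) *\<^sub>R \<gamma>)"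
    by (simp only: coef_repr[symmetric])
  then show ?thesis unfolding root_le_def by blast
qed

lemma Adj_sub: "Adj R \<Delta> A \<subseteq> PR" by (auto simp: Adj_def)
lemma Adj_mono: "A \<subseteq> B \<Longrightarrow> Adj R \<Delta> A \<subseteq> Adj R \<Delta> B" by (auto simp: Adj_def)

end

context rsys
begin

lemma inner_repr: "w \<bullet> y = (\<Sum>z\<in>\<Delta>. coef w z * (z \<bullet> y))"
proof -
  have "w \<bullet> y = (\<Sum>z\<in>\<Delta>. coef w z *\<^sub>R z) \<bullet> y" by (simp only: coef_repr[symmetric])
  also have "\<dots> = (\<Sum>z\<in>\<Delta>. coef w z * (z \<bullet> y))" by (simp add: inner_sum_left)
  finally show ?thesis .
qed

lemma cartan_repr: "cartan w y = (\<Sum>z\<in>\<Delta>. coef w z * cartan z y)"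
proof -
  have "cartan w y = 2 * (\<Sum>z\<in>\<Delta>. coef w z * (z \<bullet> y)) / (y \<bullet> y)"
    unfolding cartan_def by (subst inner_repr) (rule refl)
  also have "\<dots> = (\<Sum>z\<in>\<Delta>. coef w z * (2 * (z \<bullet> y) / (y \<bullet> y)))"
    by (simp add: sum_distrib_left sum_divide_distrib mult.left_commute)
  finally show ?thesis by (simp add: cartan_def)
qed

lemma coef_refl: "y \<in> \<Delta> \<Longrightarrow> z \<in> \<Delta> \<Longrightarrow>
   coef (refl_vec y w) z = coef w z - (if z = y then cartan w y else 0)"
  by (simp add: refl_vec_alt coef_diff coef_scale coef_simple)

lemma coef_refl_other: "y \<in> \<Delta> \<Longrightarrow> z \<in> \<Delta> \<Longrightarrow> z \<noteq> y \<Longrightarrow> coef (refl_vec y w) z = coef w z"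
  by (simp add: coef_refl)

lemma coef_refl_self: "y \<in> \<Delta> \<Longrightarrow>
   coef (refl_vec y w) y = - coef w y + (\<Sum>z\<in>\<Delta>-{y}. coef w z * (- cartan z y))"
proof -
  assume y: "y \<in> \<Delta>"
  have "cartan w y = coef w y * cartan y y + (\<Sum>z\<in>\<Delta>-{y}. coef w z * cartan z y)"
    using cartan_repr[of w y] sum.remove[OF finD y] by simp
  then have "cartan w y = 2 * coef w y + (\<Sum>z\<in>\<Delta>-{y}. coef w z * cartan z y)"
    using cartan_self[OF nzD[OF y]] by simp
  then show ?thesis using coef_refl[OF y y, of w] by (simp add: sum_negf)
qed

lemma inner_pos_self: "\<alpha> \<in> R \<Longrightarrow> \<alpha> \<bullet> \<alpha> > 0" using nz by simp

lemma cartan_zero_iff: "b \<in> R \<Longrightarrow> cartan a b = 0 \<longleftrightarrow> a \<bullet> b = 0"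
  using inner_pos_self[of b] by (auto simp: cartan_def)

lemma cartan_sym_zero: "a \<in> R \<Longrightarrow> b \<in> R \<Longrightarrow> cartan a b = 0 \<longleftrightarrow> cartan b a = 0"
  by (simp add: cartan_zero_iff inner_commute)

lemma strict_cs:
  assumes a: "\<alpha> \<in> \<Delta>" and b: "\<beta> \<in> \<Delta>" and ne: "\<alpha> \<noteq> \<beta>"
  shows "(\<alpha> \<bullet> \<beta>)^2 < (\<alpha> \<bullet> \<alpha>) * (\<beta> \<bullet> \<beta>)"
proof -
  have le: "\<bar>\<alpha> \<bullet> \<beta>\<bar> \<le> norm \<alpha> * norm \<beta>" by (rule Cauchy_Schwarz_ineq2)
  have "\<bar>\<alpha> \<bullet> \<beta>\<bar> \<noteq> norm \<alpha> * norm \<beta>"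
  proof
    assume "\<bar>\<alpha> \<bullet> \<beta>\<bar> = norm \<alpha> * norm \<beta>"
    then have "norm \<alpha> *\<^sub>R \<beta> = norm \<beta> *\<^sub>R \<alpha> \<or> norm \<alpha> *\<^sub>R \<beta> = - norm \<beta> *\<^sub>R \<alpha>"
      by (simp add: norm_cauchy_schwarz_abs_eq)
    then have "coef (norm \<alpha> *\<^sub>R \<beta>) \<alpha> = coef (norm \<beta> *\<^sub>R \<alpha>) \<alpha> \<or>
               coef (norm \<alpha> *\<^sub>R \<beta>) \<alpha> = coef (- norm \<beta> *\<^sub>R \<alpha>) \<alpha>" by auto
    then have "norm \<beta> = 0" using a b ne by (auto simp: coef_scale coef_simple coef_neg)
    then show False using nzD[OF b] by simp
  qed
  then have lt: "\<bar>\<alpha> \<bullet> \<beta>\<bar> < norm \<alpha> * norm \<beta>" using le by simp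
  have "(\<alpha> \<bullet> \<beta>)^2 = \<bar>\<alpha> \<bullet> \<beta>\<bar>^2" by simp
  also have "\<dots> < (norm \<alpha> * norm \<beta>)^2"
    using lt by (intro power_strict_mono) auto
  also have "\<dots> = (\<alpha> \<bullet> \<alpha>) * (\<beta> \<bullet> \<beta>)" by (simp add: power_mult_distrib dot_square_norm)
  finally show ?thesis .
qed

lemma cartan_prod_lt4:
  assumes a: "\<alpha> \<in> \<Delta>" and b: "\<beta> \<in> \<Delta>" and ne: "\<alpha> \<noteq> \<beta>"
  shows "cartan \<alpha> \<beta> * cartan \<beta> \<alpha> < 4"
proof -
  have pa: "\<alpha> \<bullet> \<alpha> > 0" and pb: "\<beta> \<bullet> \<beta> > 0" using a b D_sub inner_pos_self by auto
  have "cartan \<alpha> \<beta> * cartan \<beta> \<alpha> = 4 * (\<alpha> \<bullet> \<beta>)^2 / ((\<alpha> \<bullet> \<alpha>) * (\<beta> \<bullet> \<beta>))"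
    by (simp add: cartan_def power2_eq_square inner_commute)
  also have "\<dots> < 4" using strict_cs[OF a b ne] pa pb by (simp add: divide_less_eq)
  finally show ?thesis .
qed

lemma cartan_prod_nonneg: "cartan \<alpha> \<beta> * cartan \<beta> \<alpha> \<ge> 0"
proof -
  have "cartan \<alpha> \<beta> * cartan \<beta> \<alpha> = 4 * (\<alpha> \<bullet> \<beta>)^2 / ((\<alpha> \<bullet> \<alpha>) * (\<beta> \<bullet> \<beta>))"
    by (simp add: cartan_def power2_eq_square inner_commute)
  also have "\<dots> \<ge> 0" by simp
  finally show ?thesis .
qed

lemma simple_diff_not_root:
  assumes a: "\<alpha> \<in> \<Delta>" and b: "\<beta> \<in> \<Delta>" and ne: "\<alpha> \<noteq> \<beta>"
  shows "\<alpha> - \<beta> \<notin> R"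
proof
  assume "\<alpha> - \<beta> \<in> R"
  moreover have "coef (\<alpha> - \<beta>) \<alpha> = 1" "coef (\<alpha> - \<beta>) \<beta> = -1"
    using a b ne by (auto simp: coef_diff coef_simple)
  ultimately show False using root_coef[of "\<alpha> - \<beta>"] a b by force
qed

lemma inner_simple_nonpos:
  assumes a: "\<alpha> \<in> \<Delta>" and b: "\<beta> \<in> \<Delta>" and ne: "\<alpha> \<noteq> \<beta>"
  shows "\<alpha> \<bullet> \<beta> \<le> 0"
proof (rule ccontr)
  assume "\<not> \<alpha> \<bullet> \<beta> \<le> 0"
  then have pos: "\<alpha> \<bullet> \<beta> > 0" by simp
  have aR: "\<alpha> \<in> R" and bR: "\<beta> \<in> R" using a b D_sub by auto
  have pa: "\<alpha> \<bullet> \<alpha> > 0" and pb: "\<beta> \<bullet> \<beta> > 0" using aR bR inner_pos_self by auto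
  have c1: "cartan \<alpha> \<beta> > 0" using pos pb by (simp add: cartan_def)
  have c2: "cartan \<beta> \<alpha> > 0" using pos pa by (simp add: cartan_def inner_commute)
  obtain k1 where k1: "cartan \<alpha> \<beta> = of_int k1" using cartan_int[OF bR aR] by (auto elim: Ints_cases)
  obtain k2 where k2: "cartan \<beta> \<alpha> = of_int k2" using cartan_int[OF aR bR] by (auto elim: Ints_cases)
  have "k1 \<ge> 1" "k2 \<ge> 1" using c1 c2 k1 k2 by auto
  moreover have "k1 * k2 < 4" using cartan_prod_lt4[OF a b ne] k1 k2
    by (metis of_int_less_iff of_int_mult of_int_numeral)
  ultimately have "k1 = 1 \<or> k2 = 1" using mult_mono[of 2 k1 2 k2] by linarith
  then show False
  proof
    assume "k1 = 1"
    then have "refl_vec \<beta> \<alpha> = \<alpha> - \<beta>" using k1 by (simp add: refl_vec_alt)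
    then show False using refl_in_R[OF bR aR] simple_diff_not_root[OF a b ne] by simp
  next
    assume "k2 = 1"
    then have "refl_vec \<alpha> \<beta> = \<beta> - \<alpha>" using k2 by (simp add: refl_vec_alt)
    then show False using refl_in_R[OF aR bR] simple_diff_not_root[OF b a] ne by simp
  qed
qed

lemma cartan_simple_nonpos:
  "\<alpha> \<in> \<Delta> \<Longrightarrow> \<beta> \<in> \<Delta> \<Longrightarrow> \<alpha> \<noteq> \<beta> \<Longrightarrow> cartan \<alpha> \<beta> \<le> 0"
  using inner_simple_nonpos[of \<alpha> \<beta>] inner_pos_self[of \<beta>] D_sub
  by (auto simp: cartan_def divide_nonpos_pos)

lemma cartan_simple_int: "\<alpha> \<in> \<Delta> \<Longrightarrow> \<beta> \<in> \<Delta> \<Longrightarrow> cartan \<alpha> \<beta> \<in> \<int>"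
  using cartan_int D_sub by auto

lemma cartan_simple_le_m1:
  "\<alpha> \<in> \<Delta> \<Longrightarrow> \<beta> \<in> \<Delta> \<Longrightarrow> \<alpha> \<noteq> \<beta> \<Longrightarrow> cartan \<alpha> \<beta> \<noteq> 0 \<Longrightarrow> cartan \<alpha> \<beta> \<le> -1"
proof -
  assume h: "\<alpha> \<in> \<Delta>" "\<beta> \<in> \<Delta>" "\<alpha> \<noteq> \<beta>" "cartan \<alpha> \<beta> \<noteq> 0"
  obtain k where k: "cartan \<alpha> \<beta> = of_int k" using cartan_simple_int[OF h(1,2)] by (auto elim: Ints_cases)
  have "k \<le> 0" using cartan_simple_nonpos[OF h(1-3)] k by simp
  then show ?thesis using k h(4) by simp
qed

lemma cartan_prod_ge1:
  assumes "\<alpha> \<in> \<Delta>" "\<beta> \<in> \<Delta>" "\<alpha> \<noteq> \<beta>" "\<alpha> \<bullet> \<beta> \<noteq> 0"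
  shows "cartan \<alpha> \<beta> * cartan \<beta> \<alpha> \<ge> 1"
proof -
  have "cartan \<alpha> \<beta> \<noteq> 0" "cartan \<beta> \<alpha> \<noteq> 0"
    using assms D_sub by (auto simp: cartan_zero_iff inner_commute)
  then have "cartan \<alpha> \<beta> \<le> -1" "cartan \<beta> \<alpha> \<le> -1"
    using cartan_simple_le_m1 assms by auto
  then show ?thesis using mult_mono[of 1 "- cartan \<alpha> \<beta>" 1 "- cartan \<beta> \<alpha>"] by simp
qed

end

context rsys
begin

lemma nu_seq_sub: "nu_seq R \<Delta> u k \<subseteq> PR"
  by (cases k) auto

lemma nu_seq_mono: "nu_seq R \<Delta> u (Suc k) \<subseteq> nu_seq R \<Delta> u k"
proof (induction k)
  case 0
  then show ?case using Adj_sub by auto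
next
  case (Suc k)
  then have "Adj R \<Delta> (nu_seq R \<Delta> u (Suc k)) \<subseteq> Adj R \<Delta> (nu_seq R \<Delta> u k)" by (rule Adj_mono)
  then show ?case by auto
qed

lemma nu_seq_fix:
  assumes "nu_seq R \<Delta> u (Suc k) = nu_seq R \<Delta> u k"
  shows "nu_seq R \<Delta> u (k + j) = nu_seq R \<Delta> u k"
proof (induction j)
  case 0 then show ?case by simp
next
  case (Suc j)
  have "nu_seq R \<Delta> u (k + Suc j) = u ` Adj R \<Delta> (nu_seq R \<Delta> u (k + j)) \<inter> PR" by simp
  also have "\<dots> = u ` Adj R \<Delta> (nu_seq R \<Delta> u k) \<inter> PR" using Suc by simp
  also have "\<dots> = nu_seq R \<Delta> u (Suc k)" by simp
  finally show ?case using assms by simp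
qed

lemma finPR: "finite PR" using PR_sub finR finite_subset by blast

lemma nu_seq_exists_fix: "\<exists>k. nu_seq R \<Delta> u (Suc k) = nu_seq R \<Delta> u k"
proof (rule ccontr)
  assume "\<not> ?thesis"
  then have ne: "\<forall>k. nu_seq R \<Delta> u (Suc k) \<noteq> nu_seq R \<Delta> u k" by blast
  have fin: "\<And>k. finite (nu_seq R \<Delta> u k)" using finPR nu_seq_sub finite_subset by blast
  have "card (nu_seq R \<Delta> u k) + k \<le> card (nu_seq R \<Delta> u 0)" for k
  proof (induction k)
    case 0 then show ?case by simp
  next
    case (Suc k)
    have "nu_seq R \<Delta> u (Suc k) \<subseteq> nu_seq R \<Delta> u k" by (rule nu_seq_mono)
    then have "nu_seq R \<Delta> u (Suc k) \<subset> nu_seq R \<Delta> u k" using ne[rule_format, of k] by blast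
    then have "card (nu_seq R \<Delta> u (Suc k)) < card (nu_seq R \<Delta> u k)"
      by (rule psubset_card_mono[OF fin])
    then show ?case using Suc by simp
  qed
  from this[of "Suc (card (nu_seq R \<Delta> u 0))"] show False by simp
qed

lemma nu_eq: "\<exists>k0. nu R \<Delta> u = nu_seq R \<Delta> u k0 \<and> (\<forall>k\<ge>k0. nu_seq R \<Delta> u k = nu_seq R \<Delta> u k0)"
proof -
  obtain k0 where k0: "nu_seq R \<Delta> u (Suc k0) = nu_seq R \<Delta> u k0" using nu_seq_exists_fix by blast
  have st: "\<forall>k\<ge>k0. nu_seq R \<Delta> u k = nu_seq R \<Delta> u k0"
  proof (intro allI impI)
    fix k assume "k0 \<le> k"
    then obtain j where "k = k0 + j" using le_Suc_ex by blast
    then show "nu_seq R \<Delta> u k = nu_seq R \<Delta> u k0" using nu_seq_fix[OF k0, of j] by simp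
  qed
  have "nu R \<Delta> u = nu_seq R \<Delta> u k0"
    unfolding nu_def
  proof (rule the_equality)
    show "\<exists>k1. \<forall>k\<ge>k1. nu_seq R \<Delta> u k = nu_seq R \<Delta> u k0" using st by blast
  next
    fix S assume "\<exists>k1. \<forall>k\<ge>k1. nu_seq R \<Delta> u k = S"
    then obtain k1 where "\<forall>k\<ge>k1. nu_seq R \<Delta> u k = S" by blast
    then have "nu_seq R \<Delta> u (max k0 k1) = S" by (meson max.cobounded2)
    moreover have "nu_seq R \<Delta> u (max k0 k1) = nu_seq R \<Delta> u k0" using st by (meson max.cobounded1)
    ultimately show "S = nu_seq R \<Delta> u k0" by simp
  qed
  then show ?thesis using st by blast
qed

lemma rational_if_empty:
  assumes "u \<in> weyl R" "nu_seq R \<Delta> u k = {}"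
  shows "rational R \<Delta> u"
proof -
  obtain k0 where k0: "nu R \<Delta> u = nu_seq R \<Delta> u k0" "\<forall>k\<ge>k0. nu_seq R \<Delta> u k = nu_seq R \<Delta> u k0"
    using nu_eq by blast
  have dec: "nu_seq R \<Delta> u (k + j) \<subseteq> nu_seq R \<Delta> u k" for j
  proof (induction j)
    case 0 then show ?case by simp
  next
    case (Suc j)
    have e: "k + Suc j = Suc (k + j)" by simp
    show ?case unfolding e using order_trans[OF nu_seq_mono Suc.IH] .
  qed
  have m: "k + (max k k0 - k) = max k k0" by simp
  have "nu_seq R \<Delta> u (max k k0) \<subseteq> nu_seq R \<Delta> u k" using dec[of "max k k0 - k"] unfolding m .
  then have e1: "nu_seq R \<Delta> u (max k k0) = {}" using assms(2) by blast
  have "nu_seq R \<Delta> u (max k k0) = nu_seq R \<Delta> u k0" using k0(2) max.cobounded2 by blast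
  then have "nu R \<Delta> u = {}" using e1 k0(1) by simp
  then show ?thesis using assms(1) unfolding rational_def by simp
qed

lemma not_rational_witness:
  assumes I: "I \<subseteq> PR" "I \<noteq> {}" "I \<subseteq> Adj R \<Delta> (u ` I \<inter> PR)"
  shows "\<not> rational R \<Delta> u"
proof -
  have sub: "u ` I \<inter> PR \<subseteq> nu_seq R \<Delta> u k" for k
  proof (induction k)
    case 0 then show ?case using I(1) by auto
  next
    case (Suc k)
    then have "Adj R \<Delta> (u ` I \<inter> PR) \<subseteq> Adj R \<Delta> (nu_seq R \<Delta> u k)" by (rule Adj_mono)
    then have "I \<subseteq> Adj R \<Delta> (nu_seq R \<Delta> u k)" using I(3) by blast
    then show ?case by auto
  qed
  have "Adj R \<Delta> (u ` I \<inter> PR) \<noteq> {}" using I(2,3) by blast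
  then have "u ` I \<inter> PR \<noteq> {}" unfolding Adj_def by blast
  moreover obtain k0 where "nu R \<Delta> u = nu_seq R \<Delta> u k0" using nu_eq by blast
  ultimately have "nu R \<Delta> u \<noteq> {}" using sub[of k0] by blast
  then show ?thesis unfolding rational_def by blast
qed

lemma rational_invariant:
  assumes w: "u \<in> weyl R"
    and T0: "PR \<subseteq> T 0"
    and Tstep: "\<And>m. u ` T m \<inter> PR \<subseteq> T (Suc m)"
    and Tadj: "\<And>m. Adj R \<Delta> (T m) \<subseteq> T m"
    and Tend: "T (Suc N) = {}"
  shows "rational R \<Delta> u"
proof -
  have "nu_seq R \<Delta> u k \<subseteq> T (Suc k)" for k
  proof (induction k)
    case 0 then show ?case using Tstep[of 0] T0 by auto
  next
    case (Suc k)
    have "Adj R \<Delta> (nu_seq R \<Delta> u k) \<subseteq> T (Suc k)" using order_trans[OF Adj_mono[OF Suc.IH] Tadj[of "Suc k"]] .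
    then show ?case using Tstep[of "Suc k"] by auto
  qed
  then have "nu_seq R \<Delta> u N = {}" using Tend by blast
  then show ?thesis using rational_if_empty[OF w] by blast
qed

end

context rsys
begin

abbreviation nonneg :: "'a \<Rightarrow> bool" where
  "nonneg v \<equiv> (\<forall>\<alpha>\<in>\<Delta>. coef v \<alpha> \<ge> 0)"

lemma coef_untouched:
  "set ys \<subseteq> \<Delta> \<Longrightarrow> z \<in> \<Delta> \<Longrightarrow> z \<notin> set ys \<Longrightarrow> coef (refl_prod ys v) z = coef v z"
proof (induction ys)
  case Nil then show ?case by (simp add: refl_prod_Nil)
next
  case (Cons y ys)
  then show ?case by (simp add: refl_prod_Cons coef_refl_other)
qed

lemma refl_self_lb:
  assumes y: "y \<in> \<Delta>" and w: "nonneg w" and Z: "Z \<subseteq> \<Delta> - {y}"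
  shows "coef (refl_vec y w) y \<ge> - coef w y + (\<Sum>z\<in>Z. coef w z * (- cartan z y))"
proof -
  have nn: "\<forall>z\<in>\<Delta>-{y}. 0 \<le> coef w z * (- cartan z y)"
  proof
    fix z assume z: "z \<in> \<Delta>-{y}"
    then have "coef w z \<ge> 0" "cartan z y \<le> 0" using w cartan_simple_nonpos[of z y] y by auto
    then show "0 \<le> coef w z * (- cartan z y)" by (simp add: mult_nonneg_nonpos)
  qed
  have "(\<Sum>z\<in>Z. coef w z * (- cartan z y)) \<le> (\<Sum>z\<in>\<Delta>-{y}. coef w z * (- cartan z y))"
    by (rule sum_mono2) (use finD Z nn in auto)
  then show ?thesis using coef_refl_self[OF y, of w] by simp
qed

lemma refl_self_lb1:
  assumes y: "y \<in> \<Delta>" and w: "nonneg w" and z: "z \<in> \<Delta>" "z \<noteq> y"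
  shows "coef (refl_vec y w) y \<ge> - coef w y + coef w z * (- cartan z y)"
  using refl_self_lb[OF y w, of "{z}"] z by simp

lemma nonneg_refl:
  assumes y: "y \<in> \<Delta>" and w: "nonneg w" and c: "coef (refl_vec y w) y \<ge> 0"
  shows "nonneg (refl_vec y w)"
proof
  fix \<alpha> assume a: "\<alpha> \<in> \<Delta>"
  show "coef (refl_vec y w) \<alpha> \<ge> 0"
  proof (cases "\<alpha> = y")
    case True then show ?thesis using c by simp
  next
    case False then show ?thesis using w a y by (simp add: coef_refl_other)
  qed
qed

lemma nonneg_prod:
  assumes "distinct ys" "set ys \<subseteq> \<Delta>" "nonneg v" "\<forall>y\<in>set ys. coef v y = 0"
  shows "nonneg (refl_prod ys v)"
  using assms
proof (induction ys)
  case Nil then show ?case by (simp add: refl_prod_Nil)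
next
  case (Cons y ys)
  let ?w = "refl_prod ys v"
  have y: "y \<in> \<Delta>" and ny: "y \<notin> set ys" using Cons.prems by auto
  have w: "nonneg ?w" using Cons by auto
  have "coef ?w y = 0" using coef_untouched[of ys y v] Cons.prems y ny by auto
  then have "coef (refl_vec y ?w) y \<ge> 0" using refl_self_lb[OF y w, of "{}"] by simp
  then show ?case using nonneg_refl[OF y w] by (simp add: refl_prod_Cons)
qed

lemma lb_through:
  assumes ys1: "set ys1 \<subseteq> \<Delta>" "y \<notin> set ys1" and y: "y \<in> \<Delta>" "y \<notin> set ys2"
    and ys2: "set ys2 \<subseteq> \<Delta>" "distinct ys2" and v: "nonneg v" "\<forall>y'\<in>set ys2. coef v y' = 0" "coef v y = 0"
    and z: "z \<in> \<Delta>" "z \<noteq> y"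
  shows "coef (refl_prod (ys1 @ y # ys2) v) y \<ge> coef (refl_prod ys2 v) z * (- cartan z y)"
proof -
  let ?w = "refl_prod ys2 v"
  have w: "nonneg ?w" using nonneg_prod[OF ys2(2,1) v(1,2)] .
  have w0: "coef ?w y = 0" using coef_untouched[OF ys2(1) y(1,2)] v(3) by simp
  have "coef (refl_prod (ys1 @ y # ys2) v) y = coef (refl_vec y ?w) y"
    using coef_untouched[OF ys1(1) y(1) ys1(2)]
    by (simp add: refl_prod_append refl_prod_Cons)
  then show ?thesis using refl_self_lb1[OF y(1) w z] w0 by simp
qed

lemma simple_nonneg: "\<alpha> \<in> \<Delta> \<Longrightarrow> nonneg \<alpha>"
  by (simp add: coef_simple)

lemma witness_from_images:
  assumes w: "u \<in> weyl R" and K: "K \<subseteq> \<Delta>" "K \<noteq> {}"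
    and img: "\<And>x. x \<in> K \<Longrightarrow> \<exists>y\<in>K. coef (u y) x \<ge> 1"
  shows "\<not> rational R \<Delta> u"
proof (rule not_rational_witness)
  show "K \<subseteq> PR" using K D_sub_PR by auto
  show "K \<noteq> {}" by fact
  show "K \<subseteq> Adj R \<Delta> (u ` K \<inter> PR)"
  proof
    fix x assume x: "x \<in> K"
    then obtain y where y: "y \<in> K" "coef (u y) x \<ge> 1" using img by blast
    have xD: "x \<in> \<Delta>" using x K by auto
    have uyR: "u y \<in> R" using weyl_maps_R[OF rs w] y K D_sub by auto
    have uyP: "u y \<in> PR" using pos_root_if[OF uyR xD] y by simp
    have "root_le \<Delta> x (u y)"
    proof (rule root_le_intro)
      show "x \<in> R" using xD D_sub by auto
      show "u y \<in> R" by fact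
      show "\<forall>\<gamma>\<in>\<Delta>. coef x \<gamma> \<le> coef (u y) \<gamma>"
        using y(2) PR_nonneg[OF uyP] xD by (auto simp: coef_simple)
    qed
    then show "x \<in> Adj R \<Delta> (u ` K \<inter> PR)"
      unfolding Adj_def using x K D_sub_PR uyP y(1) by blast
  qed
qed

text \<open>Source / multiple bond defect.\<close>
lemma cox_source:
  assumes xs: "xs = pre @ p # post" "distinct xs" "set xs \<subseteq> \<Delta>"
    and Y: "Y \<subseteq> set post" "(\<Sum>y\<in>Y. cartan p y * cartan y p) \<ge> 2"
  shows "\<not> rational R \<Delta> (refl_prod xs)"
proof (rule witness_from_images[of _ "{p}"])
  show "refl_prod xs \<in> weyl R" using xs(3) D_sub by (intro weyl_refl_prod) auto
  have p: "p \<in> \<Delta>" using xs by auto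
  show "{p} \<subseteq> \<Delta>" "{p} \<noteq> {}" using p by auto
  have post: "set post \<subseteq> \<Delta>" "distinct post" "p \<notin> set post" "p \<notin> set pre" "set pre \<subseteq> \<Delta>"
    using xs by auto
  let ?w = "refl_prod post p"
  have z0: "\<forall>y'\<in>set post. coef p y' = 0" using post p by (auto simp: coef_simple)
  have w: "nonneg ?w" using nonneg_prod[OF post(2,1) simple_nonneg[OF p] z0] .
  have wp: "coef ?w p = 1" using coef_untouched[OF post(1) p post(3)] p by (simp add: coef_simple)
  have wy: "coef ?w y \<ge> - cartan p y" if y: "y \<in> set post" for y
  proof -
    obtain post1 post2 where sp: "post = post1 @ y # post2" using split_list[OF y] by blast
    have d: "distinct (post1 @ y # post2)" using post(2) sp by simp
    have s: "set (post1 @ y # post2) \<subseteq> \<Delta>" using post(1) sp by simp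
    have yD: "y \<in> \<Delta>" using y post by auto
    have "coef ?w y \<ge> coef (refl_prod post2 p) p * (- cartan p y)"
      unfolding sp
    proof (rule lb_through)
      show "set post1 \<subseteq> \<Delta>" "y \<notin> set post1" "y \<in> \<Delta>" "y \<notin> set post2" "set post2 \<subseteq> \<Delta>" "distinct post2"
        using d s by auto
      show "nonneg p" by (rule simple_nonneg[OF p])
      show "\<forall>y'\<in>set post2. coef p y' = 0" using z0 sp by auto
      show "coef p y = 0" using z0 y by auto
      show "p \<in> \<Delta>" by fact
      show "p \<noteq> y" using post(3) y by auto
    qed
    moreover have "coef (refl_prod post2 p) p = 1"
      using coef_untouched[of post2 p p] s p post(3) sp by (simp add: coef_simple)
    ultimately show ?thesis by simp
  qed
  have YD: "Y \<subseteq> \<Delta> - {p}" using Y(1) post by auto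
  have "coef (refl_vec p ?w) p \<ge> - coef ?w p + (\<Sum>y\<in>Y. coef ?w y * (- cartan y p))"
    by (rule refl_self_lb[OF p w YD])
  moreover have "(\<Sum>y\<in>Y. coef ?w y * (- cartan y p)) \<ge> (\<Sum>y\<in>Y. cartan p y * cartan y p)"
  proof (rule sum_mono)
    fix y assume yY: "y \<in> Y"
    have "- cartan y p \<ge> 0" using cartan_simple_nonpos[of y p] YD yY p by auto
    then have "(- cartan p y) * (- cartan y p) \<le> coef ?w y * (- cartan y p)"
      using wy[of y] yY Y(1) by (intro mult_right_mono) auto
    then show "cartan p y * cartan y p \<le> coef ?w y * (- cartan y p)" by simp
  qed
  ultimately have "coef (refl_vec p ?w) p \<ge> 1" using wp Y(2) by simp
  moreover have "coef (refl_prod xs p) p = coef (refl_vec p ?w) p"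
    using coef_untouched[OF post(5) p post(4)] xs(1) by (simp add: refl_prod_append refl_prod_Cons)
  ultimately show "\<exists>y\<in>{p}. coef (refl_prod xs y) x \<ge> 1" if "x \<in> {p}" for x using that by simp
qed

end

context rsys
begin

lemma adj_cartan_le: "a \<in> \<Delta> \<Longrightarrow> b \<in> \<Delta> \<Longrightarrow> a \<noteq> b \<Longrightarrow> a \<bullet> b \<noteq> 0 \<Longrightarrow> - cartan a b \<ge> 1"
  using cartan_simple_le_m1[of a b] cartan_zero_iff[of b a] D_sub by auto

text \<open>Sink defect.\<close>
lemma cox_sink:
  assumes xs: "xs = A @ q1 # B @ q2 # C @ p # D" "distinct xs" "set xs \<subseteq> \<Delta>"
    and adj1: "q1 \<bullet> p \<noteq> 0" and adj2: "q2 \<bullet> p \<noteq> 0"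
  shows "\<not> rational R \<Delta> (refl_prod xs)"
proof (rule witness_from_images[of _ "{q1, q2}"])
  show "refl_prod xs \<in> weyl R" using xs(3) D_sub by (intro weyl_refl_prod) auto
  have q1: "q1 \<in> \<Delta>" and q2: "q2 \<in> \<Delta>" and p: "p \<in> \<Delta>" using xs by auto
  show "{q1, q2} \<subseteq> \<Delta>" "{q1, q2} \<noteq> {}" using q1 q2 by auto
  have dist: "distinct A" "distinct B" "distinct C" "distinct D"
    "q1 \<notin> set A" "q1 \<notin> set B" "q1 \<notin> set C" "q1 \<notin> set D" "q1 \<noteq> q2" "q1 \<noteq> p"
    "q2 \<notin> set A" "q2 \<notin> set B" "q2 \<notin> set C" "q2 \<notin> set D" "q2 \<noteq> p"
    "p \<notin> set A" "p \<notin> set B" "p \<notin> set C" "p \<notin> set D"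
    "set A \<inter> set B = {}" "set A \<inter> set C = {}" "set A \<inter> set D = {}"
    "set B \<inter> set C = {}" "set B \<inter> set D = {}" "set C \<inter> set D = {}"
    using xs(1,2) by auto
  have sets: "set A \<subseteq> \<Delta>" "set B \<subseteq> \<Delta>" "set C \<subseteq> \<Delta>" "set D \<subseteq> \<Delta>" using xs by auto
  have c1p: "- cartan q1 p \<ge> 1" "- cartan p q1 \<ge> 1"
    using adj_cartan_le[OF q1 p] adj_cartan_le[OF p q1] adj1 dist by (auto simp: inner_commute)
  have c2p: "- cartan q2 p \<ge> 1" "- cartan p q2 \<ge> 1"
    using adj_cartan_le[OF q2 p] adj_cartan_le[OF p q2] adj2 dist by (auto simp: inner_commute)
  have a: "coef (refl_prod xs q1) q2 \<ge> 1"
  proof -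
    let ?v = "q1"
    have v0: "\<forall>y\<in>set (C @ p # D). coef ?v y = 0" using dist q1 sets p by (auto simp: coef_simple)
    have vq2: "coef ?v q2 = 0" using dist q1 q2 by (simp add: coef_simple)
    have dCpD: "distinct (C @ p # D)" using dist by auto
    have sCpD: "set (C @ p # D) \<subseteq> \<Delta>" using sets p by auto
    have pD: "coef (refl_prod D ?v) q1 = 1"
      using coef_untouched[OF sets(4) q1 dist(8)] q1 by (simp add: coef_simple)
    have "coef (refl_prod ([] @ p # D) ?v) p \<ge> coef (refl_prod D ?v) q1 * (- cartan q1 p)"
      by (rule lb_through) (use dist sets p q1 v0 simple_nonneg[OF q1] in auto)
    then have "coef (refl_prod (p # D) ?v) p \<ge> 1" using pD c1p by simp
    then have wp: "coef (refl_prod (C @ p # D) ?v) p \<ge> 1"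
      using coef_untouched[OF sets(3) p dist(18)] by (simp add: refl_prod_append refl_prod_Cons)
    have "coef (refl_prod ([] @ q2 # (C @ p # D)) ?v) q2 \<ge> coef (refl_prod (C @ p # D) ?v) p * (- cartan p q2)"
      by (rule lb_through) (use dist sets p q1 q2 v0 vq2 simple_nonneg[OF q1] dCpD sCpD in auto)
    moreover have "coef (refl_prod (C @ p # D) ?v) p * (- cartan p q2) \<ge> 1"
      using wp c2p(2) mult_mono[of 1 "coef (refl_prod (C @ p # D) ?v) p" 1 "- cartan p q2"] by simp
    ultimately have "coef (refl_prod (q2 # C @ p # D) ?v) q2 \<ge> 1" by simp
    moreover have "coef (refl_prod (A @ q1 # B) (refl_prod (q2 # C @ p # D) ?v)) q2
        = coef (refl_prod (q2 # C @ p # D) ?v) q2"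
      by (rule coef_untouched) (use sets q1 q2 dist in auto)
    moreover have "refl_prod xs q1 = refl_prod (A @ q1 # B) (refl_prod (q2 # C @ p # D) q1)"
      using xs(1) refl_prod_append[of "A @ q1 # B" "q2 # C @ p # D"] by simp
    ultimately show ?thesis by simp
  qed
  have b: "coef (refl_prod xs q2) q1 \<ge> 1"
  proof -
    let ?v = "q2"
    have v0: "\<forall>y\<in>set (C @ p # D). coef ?v y = 0" using dist q2 sets p by (auto simp: coef_simple)
    have dCpD: "distinct (C @ p # D)" using dist by auto
    have sCpD: "set (C @ p # D) \<subseteq> \<Delta>" using sets p by auto
    let ?w = "refl_prod (C @ p # D) ?v"
    have w: "nonneg ?w" by (rule nonneg_prod[OF dCpD sCpD simple_nonneg[OF q2] v0])
    have wq2: "coef ?w q2 = 1"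
      using coef_untouched[OF sCpD q2] dist q2 by (simp add: coef_simple)
    have pD: "coef (refl_prod D ?v) q2 = 1"
      using coef_untouched[OF sets(4) q2 dist(14)] q2 by (simp add: coef_simple)
    have "coef (refl_prod ([] @ p # D) ?v) p \<ge> coef (refl_prod D ?v) q2 * (- cartan q2 p)"
      by (rule lb_through) (use dist sets p q2 v0 simple_nonneg[OF q2] in auto)
    then have "coef (refl_prod (p # D) ?v) p \<ge> 1" using pD c2p by simp
    then have wp: "coef ?w p \<ge> 1"
      using coef_untouched[OF sets(3) p dist(18)] by (simp add: refl_prod_append refl_prod_Cons)
    let ?w' = "refl_vec q2 ?w"
    have "coef ?w' q2 \<ge> - coef ?w q2 + coef ?w p * (- cartan p q2)"
      by (rule refl_self_lb1[OF q2 w p]) (use dist in auto)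
    moreover have "coef ?w p * (- cartan p q2) \<ge> 1"
      using wp c2p(2) mult_mono[of 1 "coef ?w p" 1 "- cartan p q2"] by simp
    ultimately have "coef ?w' q2 \<ge> 0" using wq2 by simp
    then have w': "nonneg ?w'" by (rule nonneg_refl[OF q2 w])
    have w'p: "coef ?w' p \<ge> 1" using wp coef_refl_other[OF q2 p] dist by simp
    have w'0: "\<forall>y\<in>set (A @ q1 # B). coef ?w' y = 0"
    proof
      fix y assume y: "y \<in> set (A @ q1 # B)"
      then have yD: "y \<in> \<Delta>" and yq2: "y \<noteq> q2" and ynot: "y \<notin> set (C @ p # D)"
        using sets q1 dist by auto
      have "coef ?w' y = coef ?w y" using coef_refl_other[OF q2 yD yq2] .
      also have "\<dots> = coef ?v y" by (rule coef_untouched[OF sCpD yD ynot])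
      also have "\<dots> = 0" using yq2 yD q2 by (simp add: coef_simple)
      finally show "coef ?w' y = 0" .
    qed
    have "coef (refl_prod (A @ q1 # B) ?w') q1 \<ge> coef (refl_prod B ?w') p * (- cartan p q1)"
      by (rule lb_through) (use dist sets p q1 w' w'0 in auto)
    moreover have "coef (refl_prod B ?w') p = coef ?w' p"
      by (rule coef_untouched[OF sets(2) p dist(17)])
    moreover have "coef ?w' p * (- cartan p q1) \<ge> 1"
      using w'p c1p(2) mult_mono[of 1 "coef ?w' p" 1 "- cartan p q1"] by simp
    ultimately have "coef (refl_prod (A @ q1 # B) ?w') q1 \<ge> 1" by simp
    moreover have "refl_prod xs q2 = refl_prod (A @ q1 # B) ?w'"
      using xs(1) refl_prod_append[of "A @ q1 # B" "q2 # C @ p # D"] by (simp add: refl_prod_Cons)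
    ultimately show ?thesis by simp
  qed
  show "\<exists>y\<in>{q1, q2}. coef (refl_prod xs y) x \<ge> 1" if "x \<in> {q1, q2}" for x
    using that a b by auto
qed

end

context rsys
begin

definition mixed :: "'a set \<Rightarrow> 'a \<Rightarrow> bool" where
  "mixed X \<beta> \<longleftrightarrow> (\<exists>x\<in>X. coef \<beta> x \<noteq> 0) \<and> (\<exists>y\<in>\<Delta>-X. coef \<beta> y \<noteq> 0)"

definition ht :: "'a \<Rightarrow> real" where
  "ht \<beta> = (\<Sum>\<alpha>\<in>\<Delta>. coef \<beta> \<alpha>)"

lemma mixed_swap: "X \<subseteq> \<Delta> \<Longrightarrow> mixed X \<beta> \<longleftrightarrow> mixed (\<Delta> - X) \<beta>"
  unfolding mixed_def by (auto simp: Diff_Diff_Int inf.absorb2)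

lemma ht_refl: "\<alpha> \<in> \<Delta> \<Longrightarrow> ht (refl_vec \<alpha> \<beta>) = ht \<beta> - cartan \<beta> \<alpha>"
proof -
  assume a: "\<alpha> \<in> \<Delta>"
  have "ht (refl_vec \<alpha> \<beta>) = (\<Sum>z\<in>\<Delta>. coef \<beta> z - (if z = \<alpha> then cartan \<beta> \<alpha> else 0))"
    unfolding ht_def by (rule sum.cong) (use a coef_refl in auto)
  also have "\<dots> = ht \<beta> - cartan \<beta> \<alpha>"
    using a finD by (simp add: sum_subtractf ht_def)
  finally show ?thesis .
qed

lemma ht_nonneg: "\<beta> \<in> PR \<Longrightarrow> ht \<beta> \<ge> 0"
  unfolding ht_def by (rule sum_nonneg) (simp add: PR_nonneg)

lemma neg_pos: "\<beta> \<in> R \<Longrightarrow> \<beta> \<notin> PR \<Longrightarrow> - \<beta> \<in> PR"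
  using root_coef[of \<beta>] neg_root[of \<beta>] by (force simp: pos_roots_char coef_neg)

lemma exists_pos_inner:
  assumes b: "\<beta> \<in> PR"
  shows "\<exists>\<alpha>\<in>\<Delta>. coef \<beta> \<alpha> > 0 \<and> \<beta> \<bullet> \<alpha> > 0"
proof (rule ccontr)
  assume "\<not> ?thesis"
  then have h: "\<forall>\<alpha>\<in>\<Delta>. coef \<beta> \<alpha> * (\<alpha> \<bullet> \<beta>) \<le> 0"
    using PR_nonneg[OF b] by (metis inner_commute less_eq_real_def mult_nonneg_nonpos mult_zero_left not_le)
  have "\<beta> \<bullet> \<beta> = (\<Sum>\<alpha>\<in>\<Delta>. coef \<beta> \<alpha> * (\<alpha> \<bullet> \<beta>))" by (rule inner_repr)
  also have "\<dots> \<le> 0" using h by (intro sum_nonpos) auto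
  finally have "\<beta> \<bullet> \<beta> \<le> 0" .
  moreover have "\<beta> \<bullet> \<beta> > 0" using b PR_sub inner_pos_self by auto
  ultimately show False by simp
qed

lemma mixed_step:
  assumes X: "X \<subseteq> \<Delta>" and orth: "\<forall>x\<in>X. \<forall>y\<in>\<Delta>-X. x \<bullet> y = 0"
    and b: "\<beta> \<in> PR" and m: "mixed X \<beta>" and a: "\<alpha> \<in> X" and pos: "\<beta> \<bullet> \<alpha> > 0"
  shows "refl_vec \<alpha> \<beta> \<in> PR \<and> mixed X (refl_vec \<alpha> \<beta>) \<and> ht (refl_vec \<alpha> \<beta>) \<le> ht \<beta> - 1"
proof -
  have aD: "\<alpha> \<in> \<Delta>" using a X by auto
  have aR: "\<alpha> \<in> R" and bR: "\<beta> \<in> R" using aD D_sub b PR_sub by auto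
  let ?k = "cartan \<beta> \<alpha>"
  have kpos: "?k > 0" using pos inner_pos_self[OF aR] by (simp add: cartan_def)
  obtain k where k: "?k = of_int k" using cartan_int[OF aR bR] by (auto elim: Ints_cases)
  have k1: "?k \<ge> 1" using kpos k by simp
  let ?b = "refl_vec \<alpha> \<beta>"
  have bR': "?b \<in> R" by (rule refl_in_R[OF aR bR])
  obtain y where y: "y \<in> \<Delta> - X" "coef \<beta> y \<noteq> 0" using m unfolding mixed_def by blast
  have cy: "coef ?b y = coef \<beta> y" using y a coef_refl_other[OF aD, of y \<beta>] by auto
  have "coef \<beta> y > 0" using y PR_nonneg[OF b] by (simp add: order_less_le)
  then have bP: "?b \<in> PR" using pos_root_if[OF bR'] y cy by auto
  have mx: "\<exists>x\<in>X. coef ?b x \<noteq> 0"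
  proof (rule ccontr)
    assume "\<not> ?thesis"
    then have z: "\<forall>x\<in>X. coef ?b x = 0" by blast
    have zx: "\<forall>x\<in>X-{\<alpha>}. coef \<beta> x = 0"
    proof
      fix x assume x: "x \<in> X-{\<alpha>}"
      then have "x \<in> \<Delta>" "x \<noteq> \<alpha>" "x \<in> X" using X by auto
      then show "coef \<beta> x = 0" using z coef_refl_other[OF aD, of x \<beta>] by simp
    qed
    have za: "coef \<beta> \<alpha> = ?k" using z a coef_refl[OF aD aD, of \<beta>] by simp
    have "?k = (\<Sum>z\<in>\<Delta>. coef \<beta> z * cartan z \<alpha>)" by (rule cartan_repr)
    also have "\<dots> = (\<Sum>z\<in>\<Delta>. if z = \<alpha> then ?k * 2 else 0)"
    proof (rule sum.cong)
      fix z assume zD: "z \<in> \<Delta>"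
      show "coef \<beta> z * cartan z \<alpha> = (if z = \<alpha> then ?k * 2 else 0)"
      proof (cases "z = \<alpha>")
        case True then show ?thesis using za cartan_self[OF nzD[OF aD]] by simp
      next
        case False
        show ?thesis
        proof (cases "z \<in> X")
          case True then show ?thesis using zx False by simp
        next
          case zn: False
          have "\<alpha> \<bullet> z = 0" using orth a zD zn by blast
          then have "z \<bullet> \<alpha> = 0" by (simp add: inner_commute)
          then show ?thesis using False by (simp add: cartan_def)
        qed
      qed
    qed simp
    also have "\<dots> = ?k * 2" using aD finD by simp
    finally show False using kpos by simp
  qed
  have "coef ?b y \<noteq> 0" using y(2) cy by simp
  then have "mixed X ?b" unfolding mixed_def using mx y(1) by blast
  moreover have "ht ?b \<le> ht \<beta> - 1" using ht_refl[OF aD, of \<beta>] k1 by simp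
  ultimately show ?thesis using bP by blast
qed

lemma not_mixed_pos:
  assumes A: "A \<subseteq> \<Delta>" and orth: "\<forall>x\<in>A. \<forall>y\<in>\<Delta>-A. x \<bullet> y = 0"
  shows "\<beta> \<in> PR \<Longrightarrow> \<not> mixed A \<beta>"
proof -
  have orth': "\<forall>x\<in>\<Delta>-A. \<forall>y\<in>\<Delta>-(\<Delta>-A). x \<bullet> y = 0"
  proof (intro ballI)
    fix x y assume x: "x \<in> \<Delta>-A" and y: "y \<in> \<Delta>-(\<Delta>-A)"
    then have "y \<in> A" by auto
    then have "y \<bullet> x = 0" using orth x by blast
    then show "x \<bullet> y = 0" by (simp add: inner_commute)
  qed
  have "\<forall>\<beta>\<in>PR. ht \<beta> < real n \<longrightarrow> \<not> mixed A \<beta>" for n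
  proof (induction n)
    case 0 then show ?case using ht_nonneg by force
  next
    case (Suc n)
    show ?case
    proof (intro ballI impI notI)
      fix \<beta> assume b: "\<beta> \<in> PR" and h: "ht \<beta> < real (Suc n)" and m: "mixed A \<beta>"
      obtain \<alpha> where a: "\<alpha> \<in> \<Delta>" "coef \<beta> \<alpha> > 0" "\<beta> \<bullet> \<alpha> > 0" using exists_pos_inner[OF b] by blast
      show False
      proof (cases "\<alpha> \<in> A")
        case True
        from mixed_step[OF A orth b m True a(3)] Suc.IH h show False by auto
      next
        case False
        have m': "mixed (\<Delta>-A) \<beta>" using m mixed_swap[OF A] by simp
        have "refl_vec \<alpha> \<beta> \<in> PR \<and> mixed (\<Delta>-A) (refl_vec \<alpha> \<beta>) \<and> ht (refl_vec \<alpha> \<beta>) \<le> ht \<beta> - 1"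
          by (rule mixed_step[OF _ orth' b m']) (use a False in auto)
        then show False using Suc.IH h mixed_swap[OF A] by auto
      qed
    qed
  qed
  moreover assume "\<beta> \<in> PR"
  moreover obtain n where "ht \<beta> < real n" using reals_Archimedean2 by blast
  ultimately show ?thesis by blast
qed

lemma mixed_neg: "X \<subseteq> \<Delta> \<Longrightarrow> mixed X (- \<beta>) = mixed X \<beta>"
  unfolding mixed_def by (auto simp: coef_neg subset_iff)

lemma cut_property:
  assumes ind: "indecomposable R" and A: "A \<subseteq> \<Delta>" "A \<noteq> {}" "A \<noteq> \<Delta>"
  shows "\<exists>a\<in>A. \<exists>b\<in>\<Delta>-A. a \<bullet> b \<noteq> 0"
proof (rule ccontr)
  assume "\<not> ?thesis"
  then have orth: "\<forall>x\<in>A. \<forall>y\<in>\<Delta>-A. x \<bullet> y = 0" by blast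
  have nm: "\<not> mixed A \<beta>" if "\<beta> \<in> R" for \<beta>
  proof (cases "\<beta> \<in> PR")
    case True then show ?thesis using not_mixed_pos[OF A(1) orth] by blast
  next
    case False
    then have "- \<beta> \<in> PR" using neg_pos that by blast
    then have "\<not> mixed A (- \<beta>)" using not_mixed_pos[OF A(1) orth] by blast
    then show ?thesis by (simp add: mixed_neg[OF A(1)])
  qed
  define R1 where "R1 = {\<beta>\<in>R. \<forall>y\<in>\<Delta>-A. coef \<beta> y = 0}"
  define R2 where "R2 = {\<beta>\<in>R. \<forall>x\<in>A. coef \<beta> x = 0}"
  have "R1 \<union> R2 = R" using nm unfolding R1_def R2_def mixed_def by auto
  moreover obtain a where a: "a \<in> A" using A(2) by blast
  then have "a \<in> R1" using A D_sub unfolding R1_def by (auto simp: coef_simple)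
  moreover obtain b where b: "b \<in> \<Delta> - A" using A by blast
  then have "b \<in> R2" using A D_sub unfolding R2_def by (auto simp: coef_simple)
  moreover have "\<forall>x\<in>R1. \<forall>y\<in>R2. x \<bullet> y = 0"
  proof (intro ballI)
    fix x y assume x: "x \<in> R1" and y: "y \<in> R2"
    have "x \<bullet> y = (\<Sum>z\<in>\<Delta>. coef x z * (z \<bullet> y))" by (rule inner_repr)
    also have "\<dots> = 0"
    proof (rule sum.neutral, rule ballI)
      fix z assume z: "z \<in> \<Delta>"
      show "coef x z * (z \<bullet> y) = 0"
      proof (cases "z \<in> A")
        case False then show ?thesis using x z unfolding R1_def by auto
      next
        case True
        have "z \<bullet> y = y \<bullet> z" by (simp add: inner_commute)
        also have "\<dots> = (\<Sum>w\<in>\<Delta>. coef y w * (w \<bullet> z))" by (rule inner_repr)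
        also have "\<dots> = 0"
        proof (rule sum.neutral, rule ballI)
          fix w assume w: "w \<in> \<Delta>"
          show "coef y w * (w \<bullet> z) = 0"
          proof (cases "w \<in> A")
            case True then show ?thesis using y unfolding R2_def by auto
          next
            case False
            then have "z \<bullet> w = 0" using orth \<open>z \<in> A\<close> w by blast
            then show ?thesis by (simp add: inner_commute)
          qed
        qed
        finally show ?thesis by simp
      qed
    qed
    finally show "x \<bullet> y = 0" .
  qed
  ultimately show False using ind unfolding indecomposable_def by blast
qed

end

lemma path_graph:
  fixes adj :: "nat \<Rightarrow> nat \<Rightarrow> bool"
  assumes sym: "\<And>i j. adj i j = adj j i"
    and later: "\<And>i j k. i < j \<Longrightarrow> i < k \<Longrightarrow> adj i j \<Longrightarrow> adj i k \<Longrightarrow> j = k"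
    and earlier: "\<And>i j k. j < i \<Longrightarrow> k < i \<Longrightarrow> adj j i \<Longrightarrow> adj k i \<Longrightarrow> j = k"
  shows "(\<forall>I. I \<subseteq> {..<n} \<and> I \<noteq> {} \<and> I \<noteq> {..<n} \<longrightarrow> (\<exists>i\<in>I. \<exists>j\<in>{..<n}-I. adj i j))
     \<Longrightarrow> i < n \<Longrightarrow> j < n \<Longrightarrow> i \<noteq> j \<Longrightarrow> (adj i j \<longleftrightarrow> (i = j + 1 \<or> j = i + 1))"
proof (induction n arbitrary: i j)
  case 0 then show ?case by simp
next
  case (Suc m)
  note conn = Suc.prems(1)
  show ?case
  proof (cases "m = 0")
    case True then show ?thesis using Suc.prems(2-4) by simp
  next
    case False
    have c1: "{..<m} \<subseteq> {..<Suc m}" "{..<m} \<noteq> {}" "{..<m} \<noteq> {..<Suc m}"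
      using False by auto
    have "\<exists>i\<in>{..<m}. \<exists>j\<in>{..<Suc m}-{..<m}. adj i j"
      using conn c1 by blast
    moreover have "{..<Suc m}-{..<m} = {m}" by auto
    ultimately obtain a where a: "a < m" "adj a m" by auto
    have auniq: "b = a" if "b < m" "adj b m" for b using earlier[OF that(1) a(1) that(2) a(2)] .
    have conn': "\<forall>I. I \<subseteq> {..<m} \<and> I \<noteq> {} \<and> I \<noteq> {..<m} \<longrightarrow> (\<exists>i\<in>I. \<exists>j\<in>{..<m}-I. adj i j)"
    proof (intro allI impI)
      fix I assume I: "I \<subseteq> {..<m} \<and> I \<noteq> {} \<and> I \<noteq> {..<m}"
      define I' where "I' = (if a \<in> I then insert m I else I)"
      have "I' \<subseteq> {..<Suc m}" "I' \<noteq> {}" using I by (auto simp: I'_def)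
      moreover have "I' \<noteq> {..<Suc m}"
      proof
        assume e: "I' = {..<Suc m}"
        obtain z where z: "z < m" "z \<notin> I" using I by auto
        then have "z \<in> I'" using e by simp
        then have "z \<in> I \<or> z = m" by (auto simp add: I'_def split: if_splits)
        then show False using z by simp
      qed
      ultimately have "\<exists>i\<in>I'. \<exists>j\<in>{..<Suc m}-I'. adj i j"
        using conn[rule_format, of I'] by blast
      then obtain i j where ij: "i \<in> I'" "j \<in> {..<Suc m} - I'" "adj i j"
        by blast
      show "\<exists>i\<in>I. \<exists>j\<in>{..<m}-I. adj i j"
      proof (cases "i = m")
        case True
        then have "a \<in> I" using ij(1) I by (auto simp: I'_def split: if_splits)
        have "m \<in> I'" using ij(1) True by simp
        then have "j \<noteq> m" using ij(2) by auto
        then have "j < m" using ij(2) by auto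
        then have "j = a" using auniq[of j] ij(3) True sym by auto
        then show ?thesis using ij(2) \<open>a \<in> I\<close> by (auto simp: I'_def)
      next
        case im: False
        show ?thesis
        proof (cases "j = m")
          case True
          then have "a \<notin> I" using ij(2) by (auto simp: I'_def split: if_splits)
          have "i \<in> I" "i < m" using ij(1) im I by (auto simp: I'_def split: if_splits)
          then have "i = a" using auniq ij(3) True by auto
          then show ?thesis using \<open>a \<notin> I\<close> \<open>i \<in> I\<close> by simp
        next
          case False
          then have "i \<in> I" "j \<in> {..<m} - I" using ij im by (auto simp: I'_def split: if_splits)
          then show ?thesis using ij(3) by blast
        qed
      qed
    qed
    note IH = Suc.IH[OF conn']
    have am: "a = m - 1"
    proof (rule ccontr)
      assume "a \<noteq> m - 1"
      then have "a + 1 < m" using a(1) by simp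
      then have "adj a (a + 1)" using IH[of a "a+1"] by simp
      then have "a + 1 = m" using later[of a "a+1" m] a by simp
      then show False using \<open>a + 1 < m\<close> by simp
    qed
    show ?thesis
    proof (cases "i = m \<or> j = m")
      case True
      then show ?thesis
      proof
        assume im: "i = m"
        then have "j < m" using Suc.prems by auto
        then show ?thesis using im auniq[of j] a am sym False by auto
      next
        assume jm: "j = m"
        then have "i < m" using Suc.prems by auto
        then show ?thesis using jm auniq[of i] a am False by auto
      qed
    next
      case False
      then show ?thesis using IH Suc.prems(2-4) by auto
    qed
  qed
qed


locale tA = rsys +
  fixes f :: "nat \<Rightarrow> 'a"
  assumes tAn: "typeA_numbering \<Delta> f"
begin

abbreviation "r \<equiv> card \<Delta>"

lemma fbij: "bij_betw f {1..r} \<Delta>" using tAn by (simp add: typeA_numbering_def)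
lemma fD: "i \<in> {1..r} \<Longrightarrow> f i \<in> \<Delta>" using fbij bij_betwE by blast
lemma finj: "i \<in> {1..r} \<Longrightarrow> j \<in> {1..r} \<Longrightarrow> f i = f j \<longleftrightarrow> i = j"
  using fbij unfolding bij_betw_def inj_on_def by blast
lemma fimg: "f ` {1..r} = \<Delta>" using fbij by (simp add: bij_betw_def)
lemma fsurj: "\<alpha> \<in> \<Delta> \<Longrightarrow> \<exists>i\<in>{1..r}. \<alpha> = f i"
  using fimg by blast

lemma cprod: "i \<in> {1..r} \<Longrightarrow> j \<in> {1..r} \<Longrightarrow> i \<noteq> j \<Longrightarrow>
   cartan (f i) (f j) * cartan (f j) (f i) = (if i = j + 1 \<or> j = i + 1 then 1 else 0)"
  using tAn by (simp add: typeA_numbering_def)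

lemma cA: assumes i: "i \<in> {1..r}" and j: "j \<in> {1..r}" and ne: "i \<noteq> j"
  shows "cartan (f i) (f j) = (if i = j + 1 \<or> j = i + 1 then -1 else 0)"
proof -
  have fi: "f i \<in> \<Delta>" and fj: "f j \<in> \<Delta>" and fne: "f i \<noteq> f j" using fD i j finj ne by auto
  show ?thesis
  proof (cases "i = j + 1 \<or> j = i + 1")
    case True
    then have p: "cartan (f i) (f j) * cartan (f j) (f i) = 1" using cprod[OF i j ne] by simp
    then have nz: "cartan (f i) (f j) \<noteq> 0" "cartan (f j) (f i) \<noteq> 0" by auto
    have le: "cartan (f i) (f j) \<le> -1" "cartan (f j) (f i) \<le> -1"
      using cartan_simple_le_m1[OF fi fj fne nz(1)] cartan_simple_le_m1[OF fj fi fne[symmetric] nz(2)] by auto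
    have "cartan (f i) (f j) = -1"
    proof (rule ccontr)
      assume "cartan (f i) (f j) \<noteq> -1"
      then have "cartan (f i) (f j) < -1" using le by simp
      moreover have "(- cartan (f i) (f j)) * (- cartan (f j) (f i)) \<ge> (- cartan (f i) (f j)) * 1"
        using le by (intro mult_left_mono) auto
      ultimately have "cartan (f i) (f j) * cartan (f j) (f i) > 1" by simp
      then show False using p by simp
    qed
    then show ?thesis using True by simp
  next
    case False
    then have "cartan (f i) (f j) * cartan (f j) (f i) = 0" using cprod[OF i j ne] by simp
    then have "cartan (f i) (f j) = 0 \<or> cartan (f j) (f i) = 0" by simp
    then have "cartan (f i) (f j) = 0" using cartan_sym_zero[of "f i" "f j"] fi fj D_sub by blast
    then show ?thesis using False by simp
  qed
qed

abbreviation cf :: "'a \<Rightarrow> nat \<Rightarrow> real" where "cf v k \<equiv> coef v (f k)"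

lemma tA_refl_other: "m \<in> {1..r} \<Longrightarrow> k \<in> {1..r} \<Longrightarrow> k \<noteq> m \<Longrightarrow> cf (refl_vec (f m) v) k = cf v k"
  using coef_refl_other fD finj by auto

lemma tA_refl_self: assumes m: "m \<in> {1..r}"
  shows "cf (refl_vec (f m) v) m = - cf v m + (if 2 \<le> m then cf v (m - 1) else 0)
                                   + (if m + 1 \<le> r then cf v (m + 1) else 0)"
proof -
  have fm: "f m \<in> \<Delta>" using fD m by simp
  have inj: "inj_on f ({1..r} - {m})" using finj by (auto simp: inj_on_def)
  have img: "f ` ({1..r} - {m}) = \<Delta> - {f m}" using fimg finj m by auto
  have "(\<Sum>z\<in>\<Delta>-{f m}. coef v z * (- cartan z (f m))) = (\<Sum>j\<in>{1..r}-{m}. cf v j * (- cartan (f j) (f m)))"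
    unfolding img[symmetric] by (rule sum.reindex[OF inj, unfolded comp_def])
  also have "\<dots> = (\<Sum>j\<in>{1..r}-{m}. (if j = m + 1 then cf v j else 0) + (if j = m - 1 then (if 2 \<le> m then cf v j else 0) else 0))"
  proof (rule sum.cong)
    fix j assume j: "j \<in> {1..r} - {m}"
    then have c: "cartan (f j) (f m) = (if j = m + 1 \<or> m = j + 1 then -1 else 0)" using cA m by auto
    show "cf v j * (- cartan (f j) (f m)) = (if j = m + 1 then cf v j else 0) + (if j = m - 1 then (if 2 \<le> m then cf v j else 0) else 0)"
      using j m unfolding c by auto
  qed simp
  also have "\<dots> = (\<Sum>j\<in>{1..r}-{m}. (if j = m + 1 then cf v j else 0)) + (\<Sum>j\<in>{1..r}-{m}. (if j = m - 1 then (if 2 \<le> m then cf v j else 0) else 0))"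
    by (rule sum.distrib)
  also have "(\<Sum>j\<in>{1..r}-{m}. (if j = m + 1 then cf v j else 0)) = (if m + 1 \<in> {1..r}-{m} then cf v (m + 1) else 0)"
    by (rule sum.delta) simp
  also have "(\<Sum>j\<in>{1..r}-{m}. (if j = m - 1 then (if 2 \<le> m then cf v j else 0) else 0)) = (if m - 1 \<in> {1..r}-{m} then (if 2 \<le> m then cf v (m - 1) else 0) else 0)"
    by (rule sum.delta) simp
  also have "(if m + 1 \<in> {1..r}-{m} then cf v (m + 1) else 0) + (if m - 1 \<in> {1..r}-{m} then (if 2 \<le> m then cf v (m - 1) else 0) else 0)
      = (if m + 1 \<le> r then cf v (m + 1) else 0) + (if 2 \<le> m then cf v (m - 1) else 0)"
    using m by auto
  finally show ?thesis using coef_refl_self[OF fm, of v] by simp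
qed

lemma cf_simple: "i \<in> {1..r} \<Longrightarrow> k \<in> {1..r} \<Longrightarrow> cf (f i) k = (if k = i then 1 else 0)"
  using coef_simple fD finj by auto

lemma r_pos: "r \<ge> 1"
proof -
  have "\<Delta> \<noteq> {}"
  proof
    assume "\<Delta> = {}"
    then have "span \<Delta> = {0}" by simp
    moreover obtain b :: 'a where b: "b \<in> Basis" using nonempty_Basis by blast
    ultimately have "b = 0" using spanD by (metis UNIV_I singletonD)
    then show False using b nonzero_Basis by blast
  qed
  then show ?thesis using finD by (simp add: Suc_le_eq card_gt_0_iff)
qed

definition C :: "'a \<Rightarrow> 'a" where "C = refl_prod (map f [1..<r+1])"

lemma C_coxC: "coxC \<Delta> f = C" by (simp add: C_def coxC_def)

lemma partial_step:
  assumes m: "m \<in> {1..r}" and k: "k \<in> {1..r}"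
    and IH: "\<And>k. k \<in> {1..r} \<Longrightarrow> cf w k = (if k < m + 1 then cf \<gamma> k else (if k = 1 then 0 else cf \<gamma> (k - 1)) - cf \<gamma> r)"
  shows "cf (refl_vec (f m) w) k = (if k < m then cf \<gamma> k else (if k = 1 then 0 else cf \<gamma> (k - 1)) - cf \<gamma> r)"
proof (cases "k = m")
  case False
  then show ?thesis using tA_refl_other[OF m k False] IH[OF k] by auto
next
  case True
  have i0: "cf w m = cf \<gamma> m" using IH[of m] m by simp
  have i1: "cf w (m - 1) = cf \<gamma> (m - 1)" if m2: "2 \<le> m"
  proof -
    have a: "m - 1 \<in> {1..r}" "m - 1 < m + 1" using m m2 by auto
    have "cf w (m - 1) = (if m - 1 < m + 1 then cf \<gamma> (m - 1) else (if m - 1 = 1 then 0 else cf \<gamma> (m - 1 - 1)) - cf \<gamma> r)"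
      by (rule IH[OF a(1)])
    then show ?thesis using a(2) by (simp only: if_P)
  qed
  have i2: "m + 1 \<le> r \<Longrightarrow> cf w (m + 1) = cf \<gamma> m - cf \<gamma> r" using IH[of "m + 1"] m by simp
  have "cf (refl_vec (f m) w) m = - cf w m + (if 2 \<le> m then cf w (m - 1) else 0)
                                   + (if m + 1 \<le> r then cf w (m + 1) else 0)"
    by (rule tA_refl_self[OF m])
  also have "\<dots> = (if m = 1 then 0 else cf \<gamma> (m - 1)) - cf \<gamma> r"
  proof (cases "m + 1 \<le> r")
    case True
    then show ?thesis using i0 i1 i2 m by auto
  next
    case False
    then have "m = r" using m by auto
    then show ?thesis using i0 i1 m by auto
  qed
  finally show ?thesis using True by simp
qed

lemma partial:
  assumes "j \<le> r" "k \<in> {1..r}"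
  shows "cf (refl_prod (map f [r + 1 - j..<r+1]) \<gamma>) k =
         (if k < r + 1 - j then cf \<gamma> k else (if k = 1 then 0 else cf \<gamma> (k - 1)) - cf \<gamma> r)"
  using assms
proof (induction j arbitrary: k)
  case 0 then show ?case by (simp add: refl_prod_Nil)
next
  case (Suc j)
  obtain m where mdef: "m = r - j" by blast
  have m: "m \<in> {1..r}" using Suc.prems mdef by auto
  have e: "r + 1 - Suc j = m" using Suc.prems mdef by simp
  have e2: "r + 1 - j = m + 1" using Suc.prems mdef by simp
  have ups: "[m..<r+1] = m # [m + 1..<r+1]" using m by (simp add: upt_rec)
  let ?w = "refl_prod (map f [m + 1..<r+1]) \<gamma>"
  have IH: "\<And>k. k \<in> {1..r} \<Longrightarrow> cf ?w k = (if k < m + 1 then cf \<gamma> k else (if k = 1 then 0 else cf \<gamma> (k - 1)) - cf \<gamma> r)"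
    using Suc.IH[unfolded e2] Suc.prems by auto
  have "refl_prod (map f [r + 1 - Suc j..<r+1]) \<gamma> = refl_vec (f m) ?w"
    unfolding e ups by (simp add: refl_prod_Cons)
  then show ?case unfolding e using partial_step[OF m Suc.prems(2) IH] by simp
qed

lemma C_coef: "k \<in> {1..r} \<Longrightarrow> cf (C \<gamma>) k = (if k = 1 then 0 else cf \<gamma> (k - 1)) - cf \<gamma> r"
  using partial[of r k \<gamma>] by (simp add: C_def)

end

context tA
begin

definition T :: "nat \<Rightarrow> 'a set" where
  "T m = {\<beta>\<in>PR. \<forall>i\<in>{1..r}. i \<le> m \<longrightarrow> cf \<beta> i = 0}"

lemma T_adj: "Adj R \<Delta> (T m) \<subseteq> T m"
proof
  fix \<alpha> assume "\<alpha> \<in> Adj R \<Delta> (T m)"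
  then obtain \<beta> where a: "\<alpha> \<in> PR" "\<beta> \<in> T m" "root_le \<Delta> \<alpha> \<beta>" unfolding Adj_def by blast
  have "\<forall>i\<in>{1..r}. i \<le> m \<longrightarrow> cf \<alpha> i = 0"
  proof (intro ballI impI)
    fix i assume i: "i \<in> {1..r}" "i \<le> m"
    have "cf \<alpha> i \<le> cf \<beta> i" using root_le_coef[OF a(3) fD[OF i(1)]] .
    moreover have "cf \<beta> i = 0" using a(2) i unfolding T_def by blast
    moreover have "cf \<alpha> i \<ge> 0" using PR_nonneg[OF a(1) fD[OF i(1)]] .
    ultimately show "cf \<alpha> i = 0" by simp
  qed
  then show "\<alpha> \<in> T m" using a(1) unfolding T_def by blast
qed

lemma T_end: "T (Suc r) = {}"
proof (rule ccontr)
  assume "T (Suc r) \<noteq> {}"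
  then obtain \<beta> where b: "\<beta> \<in> T (Suc r)" by blast
  have "\<forall>\<alpha>\<in>\<Delta>. coef \<beta> \<alpha> = 0"
  proof
    fix \<alpha> assume "\<alpha> \<in> \<Delta>"
    then obtain i where "i \<in> {1..r}" "\<alpha> = f i" using fsurj by blast
    then show "coef \<beta> \<alpha> = 0" using b unfolding T_def by auto
  qed
  then have "\<beta> = 0" by (rule coef_zero_all)
  moreover have "\<beta> \<in> R" using b PR_sub unfolding T_def by blast
  ultimately show False using nz by blast
qed

lemma T0: "PR \<subseteq> T 0" unfolding T_def by auto

lemma C_weyl: "C \<in> weyl R"
  unfolding C_def by (rule weyl_refl_prod) (use fD D_sub in auto)

lemma one_in: "1 \<in> {1..r}" using r_pos by simp

lemma C_step: "C ` T m \<inter> PR \<subseteq> T (Suc m)"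
proof
  fix x assume "x \<in> C ` T m \<inter> PR"
  then obtain \<gamma> where g: "\<gamma> \<in> T m" "x = C \<gamma>" "x \<in> PR" by blast
  have gP: "\<gamma> \<in> PR" using g(1) unfolding T_def by blast
  have rin: "r \<in> {1..r}" using r_pos by simp
  have "cf x 1 = - cf \<gamma> r" using C_coef[OF one_in, of \<gamma>] g(2) by simp
  moreover have "cf x 1 \<ge> 0" using PR_nonneg[OF g(3) fD[OF one_in]] .
  moreover have "cf \<gamma> r \<ge> 0" using PR_nonneg[OF gP fD[OF rin]] .
  ultimately have gr: "cf \<gamma> r = 0" by simp
  have "\<forall>i\<in>{1..r}. i \<le> Suc m \<longrightarrow> cf x i = 0"
  proof (intro ballI impI)
    fix i assume i: "i \<in> {1..r}" "i \<le> Suc m"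
    show "cf x i = 0"
    proof (cases "i = 1")
      case True then show ?thesis using C_coef[OF i(1), of \<gamma>] g(2) gr by simp
    next
      case False
      then have "i - 1 \<in> {1..r}" "i - 1 \<le> m" using i by auto
      then have "cf \<gamma> (i - 1) = 0" using g(1) unfolding T_def by blast
      then show ?thesis using C_coef[OF i(1), of \<gamma>] g(2) gr False by simp
    qed
  qed
  then show "x \<in> T (Suc m)" using g(3) unfolding T_def by blast
qed

lemma C_rational: "rational R \<Delta> C"
  by (rule rational_invariant[OF C_weyl T0 C_step T_adj T_end])

definition sC :: "'a \<Rightarrow> 'a" where "sC = refl_vec (f r) \<circ> C"

lemma sC_weyl: "sC \<in> weyl R"
  unfolding sC_def by (rule weyl_step[OF C_weyl]) (use fD D_sub r_pos in auto)

lemma sC_coef: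
  assumes r2: "r \<ge> 2" and k: "k \<in> {1..r}"
  shows "cf (sC \<gamma>) k = (if k = r then - cf \<gamma> (r - 1) + (if r = 2 then 0 else cf \<gamma> (r - 2))
                         else cf (C \<gamma>) k)"
proof (cases "k = r")
  case False
  have rin: "r \<in> {1..r}" using r2 by simp
  show ?thesis using tA_refl_other[OF rin k False] False by (simp add: sC_def)
next
  case True
  have rin: "r \<in> {1..r}" using r2 by simp
  have r1: "r - 1 \<in> {1..r}" using r2 by simp
  have "cf (sC \<gamma>) r = - cf (C \<gamma>) r + (if 2 \<le> r then cf (C \<gamma>) (r - 1) else 0) + (if r + 1 \<le> r then cf (C \<gamma>) (r + 1) else 0)"
    unfolding sC_def comp_def by (rule tA_refl_self[OF rin])
  also have "\<dots> = - cf (C \<gamma>) r + cf (C \<gamma>) (r - 1)" using r2 by simp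
  also have "\<dots> = - cf \<gamma> (r - 1) + (if r = 2 then 0 else cf \<gamma> (r - 2))"
    using C_coef[OF rin, of \<gamma>] C_coef[OF r1, of \<gamma>] r2 by (auto simp: numeral_2_eq_2)
  finally show ?thesis using True by simp
qed

lemma sC_step: assumes r2: "r \<ge> 2" shows "sC ` T m \<inter> PR \<subseteq> T (Suc m)"
proof
  fix x assume "x \<in> sC ` T m \<inter> PR"
  then obtain \<gamma> where g: "\<gamma> \<in> T m" "x = sC \<gamma>" "x \<in> PR" by blast
  have gP: "\<gamma> \<in> PR" using g(1) unfolding T_def by blast
  have rin: "r \<in> {1..r}" using r_pos by simp
  have "cf x 1 = - cf \<gamma> r" using sC_coef[OF r2 one_in, of \<gamma>] C_coef[OF one_in, of \<gamma>] g(2) r2 by simp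
  moreover have "cf x 1 \<ge> 0" using PR_nonneg[OF g(3) fD[OF one_in]] .
  moreover have "cf \<gamma> r \<ge> 0" using PR_nonneg[OF gP fD[OF rin]] .
  ultimately have gr: "cf \<gamma> r = 0" by simp
  have "\<forall>i\<in>{1..r}. i \<le> Suc m \<longrightarrow> cf x i = 0"
  proof (intro ballI impI)
    fix i assume i: "i \<in> {1..r}" "i \<le> Suc m"
    show "cf x i = 0"
    proof (cases "i = r")
      case True
      have a1: "cf \<gamma> (r - 1) = 0" using g(1) i True r2 unfolding T_def by auto
      have a2: "r \<noteq> 2 \<Longrightarrow> cf \<gamma> (r - 2) = 0" using g(1) i True r2 unfolding T_def by auto
      show ?thesis using sC_coef[OF r2 i(1), of \<gamma>] g(2) True a1 a2 by auto
    next
      case nr: False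
      show ?thesis
      proof (cases "i = 1")
        case True then show ?thesis using sC_coef[OF r2 i(1), of \<gamma>] C_coef[OF i(1), of \<gamma>] g(2) gr nr by simp
      next
        case False
        then have "i - 1 \<in> {1..r}" "i - 1 \<le> m" using i by auto
        then have "cf \<gamma> (i - 1) = 0" using g(1) unfolding T_def by blast
        then show ?thesis using sC_coef[OF r2 i(1), of \<gamma>] C_coef[OF i(1), of \<gamma>] g(2) gr False nr by simp
      qed
    qed
  qed
  then show "x \<in> T (Suc m)" using g(3) unfolding T_def by blast
qed

lemma sC_rational: "r \<ge> 2 \<Longrightarrow> rational R \<Delta> sC"
  by (rule rational_invariant[OF sC_weyl T0 sC_step T_adj T_end])

lemma siC_not_rational:
  assumes i: "i \<in> {1..r}" "i < r"
  shows "\<not> rational R \<Delta> (refl_vec (f i) \<circ> C)"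
proof (rule witness_from_images[of _ "{f i}"])
  show "refl_vec (f i) \<circ> C \<in> weyl R" by (rule weyl_step[OF C_weyl]) (use fD D_sub i in auto)
  show "{f i} \<subseteq> \<Delta>" "{f i} \<noteq> {}" using fD i by auto
  have rin: "r \<in> {1..r}" using i by simp
  have Cfi: "cf (C (f i)) k = (if k = i + 1 then 1 else 0)" if k: "k \<in> {1..r}" for k
  proof (cases "k = 1")
    case True then show ?thesis using C_coef[OF k, of "f i"] cf_simple[OF i(1) rin] i by auto
  next
    case False
    then have k1: "k - 1 \<in> {1..r}" using k by auto
    show ?thesis using C_coef[OF k, of "f i"] cf_simple[OF i(1) k1] cf_simple[OF i(1) rin] i k False by auto
  qed
  have i1: "i + 1 \<in> {1..r}" using i by simp
  have "cf (refl_vec (f i) (C (f i))) i = - cf (C (f i)) i + (if 2 \<le> i then cf (C (f i)) (i - 1) else 0)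
              + (if i + 1 \<le> r then cf (C (f i)) (i + 1) else 0)"
    by (rule tA_refl_self[OF i(1)])
  also have "\<dots> = 1"
  proof -
    have "cf (C (f i)) i = 0" using Cfi[OF i(1)] by simp
    moreover have "cf (C (f i)) (i - 1) = 0" if i2: "2 \<le> i"
    proof -
      have a: "i - 1 \<in> {1..r}" "i - 1 \<noteq> i + 1" using i i2 by auto
      show ?thesis using Cfi[OF a(1)] a(2) by (simp only: if_False)
    qed
    moreover have "cf (C (f i)) (i + 1) = 1" using Cfi[OF i1] by simp
    ultimately show ?thesis using i by simp
  qed
  finally show "\<exists>y\<in>{f i}. coef ((refl_vec (f i) \<circ> C) y) x \<ge> 1" if "x \<in> {f i}" for x
    using that by simp
qed

lemma gamma_C: assumes r2: "r \<ge> 2"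
  shows "gamma_neighbors R \<Delta> C = {refl_vec (f r) \<circ> C}"
proof
  show "gamma_neighbors R \<Delta> C \<subseteq> {refl_vec (f r) \<circ> C}"
  proof
    fix u assume "u \<in> gamma_neighbors R \<Delta> C"
    then obtain \<alpha> where u: "rational R \<Delta> u" "\<alpha> \<in> \<Delta>" "u = refl_vec \<alpha> \<circ> C"
      unfolding gamma_neighbors_def by blast
    obtain i where i: "i \<in> {1..r}" "\<alpha> = f i" using fsurj[OF u(2)] by blast
    have "\<not> i < r" using siC_not_rational[OF i(1)] u i by blast
    then have "i = r" using i by simp
    then show "u \<in> {refl_vec (f r) \<circ> C}" using u i by simp
  qed
next
  show "{refl_vec (f r) \<circ> C} \<subseteq> gamma_neighbors R \<Delta> C"
    using sC_rational[OF r2] fD r2 unfolding gamma_neighbors_def sC_def by auto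
qed

end

context tA
begin

lemma rev_map: "map (\<lambda>i. f (r + 1 - i)) [1..<r+1] = rev (map f [1..<r+1])"
proof (rule nth_equalityI)
  show "length (map (\<lambda>i. f (r + 1 - i)) [1..<r+1]) = length (rev (map f [1..<r+1]))" by simp
next
  fix k assume "k < length (map (\<lambda>i. f (r + 1 - i)) [1..<r+1])"
  then have k: "k < r" by (simp del: upt_Suc)
  then show "map (\<lambda>i. f (r + 1 - i)) [1..<r+1] ! k = rev (map f [1..<r+1]) ! k"
    by (simp add: rev_nth nth_upt Suc_diff_Suc del: upt_Suc)
qed

lemma rev_typeA: "typeA_numbering \<Delta> (\<lambda>i. f (r + 1 - i))"
  unfolding typeA_numbering_def
proof (intro conjI ballI impI)
  have b: "bij_betw (\<lambda>i. r + 1 - i) {1..r} {1..r}"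
    by (rule bij_betw_byWitness[where f' = "\<lambda>i. r + 1 - i"]) auto
  show "bij_betw (\<lambda>i. f (r + 1 - i)) {1..r} \<Delta>"
    using bij_betw_trans[OF b fbij] by (simp add: comp_def)
next
  fix i j assume i: "i \<in> {1..r}" and j: "j \<in> {1..r}" and ne: "i \<noteq> j"
  have i': "r + 1 - i \<in> {1..r}" and j': "r + 1 - j \<in> {1..r}" and ne': "r + 1 - i \<noteq> r + 1 - j"
    using i j ne by auto
  have "cartan (f (r + 1 - i)) (f (r + 1 - j)) * cartan (f (r + 1 - j)) (f (r + 1 - i)) =
        (if r + 1 - i = r + 1 - j + 1 \<or> r + 1 - j = r + 1 - i + 1 then 1 else 0)"
    by (rule cprod[OF i' j' ne'])
  moreover have "(r + 1 - i = r + 1 - j + 1 \<or> r + 1 - j = r + 1 - i + 1) \<longleftrightarrow> (i = j + 1 \<or> j = i + 1)"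
    using i j by auto
  ultimately show "cartan (f (r + 1 - i)) (f (r + 1 - j)) * cartan (f (r + 1 - j)) (f (r + 1 - i)) =
        (if i = j + 1 \<or> j = i + 1 then 1 else 0)" by simp
qed

lemma rev_cox: "coxC \<Delta> (\<lambda>i. f (r + 1 - i)) = inv (coxC \<Delta> f)"
proof -
  have "0 \<notin> set (map f [1..<r+1])" using fD nzD by auto
  then have "inv (refl_prod (map f [1..<r+1])) = refl_prod (rev (map f [1..<r+1]))"
    by (rule inv_refl_prod)
  then show ?thesis unfolding coxC_def rev_map by simp
qed

end

context rsys
begin

lemma split2:
  assumes "i < j" "j < length xs"
  shows "\<exists>A B C. xs = A @ xs ! i # B @ xs ! j # C"
proof -
  have "xs = take j xs @ xs ! j # drop (Suc j) xs" using assms(2) by (rule id_take_nth_drop)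
  moreover have "take j xs = take i (take j xs) @ (take j xs) ! i # drop (Suc i) (take j xs)"
    using assms by (intro id_take_nth_drop) simp
  moreover have "(take j xs) ! i = xs ! i" using assms by simp
  ultimately have "xs = (take i (take j xs) @ xs ! i # drop (Suc i) (take j xs)) @ xs ! j # drop (Suc j) xs"
    by metis
  then show ?thesis by auto
qed

lemma split3:
  assumes "i < j" "j < k" "k < length xs"
  shows "\<exists>A B C D. xs = A @ xs ! i # B @ xs ! j # C @ xs ! k # D"
proof -
  have xs: "xs = take k xs @ xs ! k # drop (Suc k) xs" using assms(3) by (rule id_take_nth_drop)
  obtain A B C where "take k xs = A @ (take k xs) ! i # B @ (take k xs) ! j # C"
    using split2[of i j "take k xs"] assms by auto
  moreover have "(take k xs) ! i = xs ! i" "(take k xs) ! j = xs ! j" using assms by auto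
  ultimately have "take k xs = A @ xs ! i # B @ xs ! j # C" by simp
  then have "xs = (A @ xs ! i # B @ xs ! j # C) @ xs ! k # drop (Suc k) xs" using xs by simp
  then show ?thesis by auto
qed

lemma nth_in_drop: "i < j \<Longrightarrow> j < length xs \<Longrightarrow> xs ! j \<in> set (drop (Suc i) xs)"
proof -
  assume a: "i < j" "j < length xs"
  have "drop (Suc i) xs ! (j - Suc i) = xs ! j" using a by simp
  moreover have "j - Suc i < length (drop (Suc i) xs)" using a by simp
  ultimately show ?thesis by (metis nth_mem)
qed

lemma prod_int: "\<alpha> \<in> \<Delta> \<Longrightarrow> \<beta> \<in> \<Delta> \<Longrightarrow> cartan \<alpha> \<beta> * cartan \<beta> \<alpha> \<in> \<int>"
  using cartan_simple_int by (simp add: Ints_mult)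

lemma cox_rational_typeA:
  assumes ind: "indecomposable R" and xs: "distinct xs" "set xs = \<Delta>"
    and rat: "rational R \<Delta> (refl_prod xs)"
  shows "\<exists>f. typeA_numbering \<Delta> f \<and> refl_prod xs = coxC \<Delta> f"
proof -
  define n where "n = length xs"
  have xD: "i < n \<Longrightarrow> xs ! i \<in> \<Delta>" for i using xs(2) n_def by auto
  have xinj: "i < n \<Longrightarrow> j < n \<Longrightarrow> xs ! i = xs ! j \<longleftrightarrow> i = j" for i j
    using xs(1) n_def by (simp add: nth_eq_iff_index_eq)
  have sub: "set xs \<subseteq> \<Delta>" using xs by simp
  have later: "j = k" if h: "i < j" "i < k" "j < n" "k < n" "xs ! i \<bullet> xs ! j \<noteq> 0" "xs ! i \<bullet> xs ! k \<noteq> 0" for i j k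
  proof (rule ccontr)
    assume jk: "j \<noteq> k"
    have i: "i < n" using h by simp
    let ?Y = "{xs ! j, xs ! k}"
    have Y: "?Y \<subseteq> set (drop (Suc i) xs)" using nth_in_drop h n_def by auto
    have ne: "xs ! j \<noteq> xs ! k" using xinj h jk by simp
    have q: "xs ! i \<in> \<Delta>" "xs ! j \<in> \<Delta>" "xs ! k \<in> \<Delta>" "xs ! i \<noteq> xs ! j" "xs ! i \<noteq> xs ! k"
      using xD xinj h by auto
    have p1: "cartan (xs ! i) (xs ! j) * cartan (xs ! j) (xs ! i) \<ge> 1"
      using cartan_prod_ge1[OF q(1,2,4) h(5)] .
    have p2: "cartan (xs ! i) (xs ! k) * cartan (xs ! k) (xs ! i) \<ge> 1"
      using cartan_prod_ge1[OF q(1,3,5) h(6)] .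
    have "(\<Sum>y\<in>?Y. cartan (xs ! i) y * cartan y (xs ! i)) \<ge> 2" using ne p1 p2 by simp
    then have "\<not> rational R \<Delta> (refl_prod xs)"
      using cox_source[OF id_take_nth_drop[OF i[unfolded n_def]] xs(1) sub Y] by blast
    then show False using rat by blast
  qed
  have nomult: "cartan (xs ! i) (xs ! j) * cartan (xs ! j) (xs ! i) < 2" if h: "i < j" "j < n" for i j
  proof (rule ccontr)
    assume "\<not> ?thesis"
    then have "(\<Sum>y\<in>{xs ! j}. cartan (xs ! i) y * cartan y (xs ! i)) \<ge> 2" by simp
    moreover have i: "i < n" using h by simp
    moreover have "{xs ! j} \<subseteq> set (drop (Suc i) xs)" using nth_in_drop h n_def by auto
    ultimately have "\<not> rational R \<Delta> (refl_prod xs)"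
      using cox_source[OF id_take_nth_drop[OF i[unfolded n_def]] xs(1) sub] by blast
    then show False using rat by blast
  qed
  have sink_aux: "False" if h: "j < k" "k < i" "i < n" "xs ! j \<bullet> xs ! i \<noteq> 0" "xs ! k \<bullet> xs ! i \<noteq> 0" for i j k
  proof -
    obtain A B C D where "xs = A @ xs ! j # B @ xs ! k # C @ xs ! i # D"
      using split3[of j k i xs] h n_def by auto
    then have "\<not> rational R \<Delta> (refl_prod xs)" using cox_sink xs(1) sub h(4,5) by blast
    then show False using rat by blast
  qed
  have earlier: "j = k" if h: "j < i" "k < i" "i < n" "xs ! j \<bullet> xs ! i \<noteq> 0" "xs ! k \<bullet> xs ! i \<noteq> 0" for i j k
  proof (rule ccontr)
    assume "j \<noteq> k"
    then have "j < k \<or> k < j" by auto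
    then show False using sink_aux h by blast
  qed
  define adj where "adj i j \<longleftrightarrow> i < n \<and> j < n \<and> i \<noteq> j \<and> xs ! i \<bullet> xs ! j \<noteq> 0" for i j
  have adj_sym: "adj i j = adj j i" for i j unfolding adj_def by (auto simp: inner_commute)
  have conn: "\<forall>I. I \<subseteq> {..<n} \<and> I \<noteq> {} \<and> I \<noteq> {..<n} \<longrightarrow> (\<exists>i\<in>I. \<exists>j\<in>{..<n}-I. adj i j)"
  proof (intro allI impI)
    fix I assume I: "I \<subseteq> {..<n} \<and> I \<noteq> {} \<and> I \<noteq> {..<n}"
    let ?A = "(\<lambda>i. xs ! i) ` I"
    have A1: "?A \<subseteq> \<Delta>" using I xD by auto
    have A2: "?A \<noteq> {}" using I by auto
    have A3: "?A \<noteq> \<Delta>"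
    proof
      assume e: "?A = \<Delta>"
      obtain z where z: "z < n" "z \<notin> I" using I by auto
      then have "xs ! z \<in> ?A" using e xD by auto
      then obtain i where "i \<in> I" "xs ! z = xs ! i" by auto
      then show False using xinj z I by auto
    qed
    obtain a b where ab: "a \<in> ?A" "b \<in> \<Delta> - ?A" "a \<bullet> b \<noteq> 0" using cut_property[OF ind A1 A2 A3] by blast
    obtain i where i: "i \<in> I" "a = xs ! i" using ab(1) by auto
    obtain j where j: "j < n" "b = xs ! j" using ab(2) xs(2) n_def by (auto simp: in_set_conv_nth)
    have "j \<notin> I" using ab(2) j by auto
    moreover have "i \<noteq> j" using i(1) \<open>j \<notin> I\<close> by auto
    ultimately have "adj i j" using i j ab(3) I unfolding adj_def by auto
    then show "\<exists>i\<in>I. \<exists>j\<in>{..<n}-I. adj i j" using i(1) \<open>j \<notin> I\<close> j(1) by blast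
  qed
  have path: "i < n \<Longrightarrow> j < n \<Longrightarrow> i \<noteq> j \<Longrightarrow> (adj i j \<longleftrightarrow> (i = j + 1 \<or> j = i + 1))" for i j
  proof (rule path_graph[of adj n i j, OF adj_sym _ _ conn])
    show "\<And>i j k. i < j \<Longrightarrow> i < k \<Longrightarrow> adj i j \<Longrightarrow> adj i k \<Longrightarrow> j = k"
      unfolding adj_def using later by blast
    show "\<And>i j k. j < i \<Longrightarrow> k < i \<Longrightarrow> adj j i \<Longrightarrow> adj k i \<Longrightarrow> j = k"
      unfolding adj_def using earlier by blast
  qed
  define f where "f i = xs ! (i - 1)" for i
  have cardD: "card \<Delta> = n" using xs distinct_card n_def by metis
  have bij: "bij_betw f {1..n} \<Delta>"
  proof -
    have b1: "bij_betw (\<lambda>i. i - 1) {1..n} {..<n}"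
      by (rule bij_betw_byWitness[where f' = "\<lambda>i. i + 1"]) auto
    have b2: "bij_betw ((!) xs) {..<n} \<Delta>" by (rule bij_betw_nth) (use xs n_def in auto)
    have fe: "f = (\<lambda>x. xs ! (x - 1))" by (rule ext) (simp add: f_def)
    show ?thesis using bij_betw_trans[OF b1 b2] unfolding fe by (simp add: comp_def)
  qed
  have tA: "typeA_numbering \<Delta> f"
    unfolding typeA_numbering_def cardD
  proof (intro conjI ballI impI)
    show "bij_betw f {1..n} \<Delta>" by (rule bij)
  next
    fix i j assume i: "i \<in> {1..n}" and j: "j \<in> {1..n}" and ne: "i \<noteq> j"
    have i': "i - 1 < n" "j - 1 < n" "i - 1 \<noteq> j - 1" using i j ne by auto
    have fi: "f i \<in> \<Delta>" "f j \<in> \<Delta>" "f i \<noteq> f j" using xD xinj i' unfolding f_def by auto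
    show "cartan (f i) (f j) * cartan (f j) (f i) = (if i = j + 1 \<or> j = i + 1 then 1 else 0)"
    proof (cases "i = j + 1 \<or> j = i + 1")
      case True
      then have "i - 1 = j - 1 + 1 \<or> j - 1 = i - 1 + 1" using i j by auto
      then have "adj (i - 1) (j - 1)" using path[OF i'] by simp
      then have inn: "f i \<bullet> f j \<noteq> 0" unfolding adj_def f_def by simp
      have ge: "cartan (f i) (f j) * cartan (f j) (f i) \<ge> 1" by (rule cartan_prod_ge1[OF fi inn])
      have lt: "cartan (f i) (f j) * cartan (f j) (f i) < 2"
      proof (cases "i - 1 < j - 1")
        case True then show ?thesis using nomult[of "i - 1" "j - 1"] i' unfolding f_def by simp
      next
        case False
        then have "j - 1 < i - 1" using i' by simp
        then show ?thesis using nomult[of "j - 1" "i - 1"] i' unfolding f_def by (simp add: mult.commute)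
      qed
      obtain k where k: "cartan (f i) (f j) * cartan (f j) (f i) = of_int k"
        using prod_int[OF fi(1,2)] by (auto elim: Ints_cases)
      have "k = 1" using ge lt k by simp
      then show ?thesis using k True by simp
    next
      case False
      then have "\<not> (i - 1 = j - 1 + 1 \<or> j - 1 = i - 1 + 1)" using i j by auto
      then have "\<not> adj (i - 1) (j - 1)" using path[OF i'] by simp
      then have "f i \<bullet> f j = 0" unfolding adj_def f_def using i' by simp
      then have "cartan (f i) (f j) = 0" using cartan_zero_iff[of "f j" "f i"] fi D_sub by auto
      then show ?thesis using False by simp
    qed
  qed
  have "map f [1..<n+1] = xs"
    by (rule nth_equalityI) (simp_all add: f_def n_def nth_upt del: upt_Suc)
  then have "coxC \<Delta> f = refl_prod xs" unfolding coxC_def cardD by simp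
  then show ?thesis using tA by metis
qed

end

theorem proposition2p13:
  fixes R \<Delta> :: "'a::euclidean_space set"
  assumes "root_system R" and "base R \<Delta>" and "indecomposable R"
  shows "(\<forall>c. coxeter_element \<Delta> c \<longrightarrow>
            (rational R \<Delta> c \<longleftrightarrow>
              (\<exists>f. typeA_numbering \<Delta> f \<and> (c = coxC \<Delta> f \<or> c = inv (coxC \<Delta> f)))))
       \<and> (\<forall>f. typeA_numbering \<Delta> f \<and> card \<Delta> \<ge> 2 \<longrightarrow>
            gamma_neighbors R \<Delta> (coxC \<Delta> f) = {refl_vec (f (card \<Delta>)) \<circ> coxC \<Delta> f}
          \<and> gamma_neighbors R \<Delta> (inv (coxC \<Delta> f)) = {refl_vec (f 1) \<circ> inv (coxC \<Delta> f)})"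
proof -
  interpret rsys R \<Delta> using assms(1,2) by unfold_locales
  have typeA_rat: "rational R \<Delta> (coxC \<Delta> f)" if "typeA_numbering \<Delta> f" for f
  proof -
    interpret tA R \<Delta> f using that by unfold_locales
    show ?thesis using C_rational C_coxC by simp
  qed
  have typeA_inv: "typeA_numbering \<Delta> (\<lambda>i. f (card \<Delta> + 1 - i)) \<and>
      coxC \<Delta> (\<lambda>i. f (card \<Delta> + 1 - i)) = inv (coxC \<Delta> f)" if "typeA_numbering \<Delta> f" for f
  proof -
    interpret tA R \<Delta> f using that by unfold_locales
    show ?thesis using rev_typeA rev_cox by simp
  qed
  have gam: "gamma_neighbors R \<Delta> (coxC \<Delta> f) = {refl_vec (f (card \<Delta>)) \<circ> coxC \<Delta> f}"
    if "typeA_numbering \<Delta> f" "card \<Delta> \<ge> 2" for f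
  proof -
    interpret tA R \<Delta> f using that(1) by unfold_locales
    show ?thesis using gamma_C[OF that(2)] C_coxC by simp
  qed
  have part1: "rational R \<Delta> c \<longleftrightarrow>
              (\<exists>f. typeA_numbering \<Delta> f \<and> (c = coxC \<Delta> f \<or> c = inv (coxC \<Delta> f)))"
    if c: "coxeter_element \<Delta> c" for c
  proof
    assume rat: "rational R \<Delta> c"
    obtain xs where xs: "distinct xs" "set xs = \<Delta>" "c = refl_prod xs"
      using c unfolding coxeter_element_def by blast
    obtain f where "typeA_numbering \<Delta> f" "refl_prod xs = coxC \<Delta> f"
      using cox_rational_typeA[OF assms(3) xs(1,2)] rat xs(3) by blast
    then show "\<exists>f. typeA_numbering \<Delta> f \<and> (c = coxC \<Delta> f \<or> c = inv (coxC \<Delta> f))"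
      using xs(3) by blast
  next
    assume "\<exists>f. typeA_numbering \<Delta> f \<and> (c = coxC \<Delta> f \<or> c = inv (coxC \<Delta> f))"
    then obtain f where f: "typeA_numbering \<Delta> f" "c = coxC \<Delta> f \<or> c = inv (coxC \<Delta> f)" by blast
    show "rational R \<Delta> c"
    proof (cases "c = coxC \<Delta> f")
      case True then show ?thesis using typeA_rat[OF f(1)] by simp
    next
      case False
      then have "c = inv (coxC \<Delta> f)" using f(2) by simp
      then show ?thesis using typeA_inv[OF f(1)] typeA_rat by metis
    qed
  qed
  have part2: "gamma_neighbors R \<Delta> (coxC \<Delta> f) = {refl_vec (f (card \<Delta>)) \<circ> coxC \<Delta> f}
          \<and> gamma_neighbors R \<Delta> (inv (coxC \<Delta> f)) = {refl_vec (f 1) \<circ> inv (coxC \<Delta> f)}"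
    if f: "typeA_numbering \<Delta> f" "card \<Delta> \<ge> 2" for f
  proof
    show "gamma_neighbors R \<Delta> (coxC \<Delta> f) = {refl_vec (f (card \<Delta>)) \<circ> coxC \<Delta> f}"
      by (rule gam[OF f])
    let ?g = "\<lambda>i. f (card \<Delta> + 1 - i)"
    have g: "typeA_numbering \<Delta> ?g" "coxC \<Delta> ?g = inv (coxC \<Delta> f)" using typeA_inv[OF f(1)] by auto
    have "gamma_neighbors R \<Delta> (coxC \<Delta> ?g) = {refl_vec (?g (card \<Delta>)) \<circ> coxC \<Delta> ?g}"
      by (rule gam[OF g(1) f(2)])
    then show "gamma_neighbors R \<Delta> (inv (coxC \<Delta> f)) = {refl_vec (f 1) \<circ> inv (coxC \<Delta> f)}"
      using g(2) by simp
  qed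
  show ?thesis using part1 part2 by blast
qed


end
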